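(* There exist positive integers $c_{i,k}$, for all $i\ge0$ and $i+1\le k\le 2^i$, such that for all $n\ge1$, \[ b_i(\mathcal{A}_n)=\sum_{k=i+1}^{2^i} c_{i,k}\,S(n+1,k). \] Moreover, $c_{i,k}\le \binom{2^i-1}{k-1}\frac{(k-1)!}{i!}$.
   Context: For $n\ge1$, the resonance arrangement $\mathcal{A}_n$ is the arrangement in $\mathbb{R}^n$ of the hyperplanes $H_I=\{x:\sum_{i\in I}x_i=0\}$ for all nonempty $I\subseteq[n]$. For an arrangement $\mathcal{A}$ in $\mathbb{F}^n$, its characteristic polynomial is $\chi(\mathcal{A};t)=\sum_{S\subseteq\mathcal{A}}(-1)^{|S|}t^{r(\mathcal{A})-r(S)}$ where $r(S)=\operatorname{codim}\bigcap_{H\in S}H$, and the $i$-th Betti number $b_i(\mathcal{A})$ is the absolute value of the coefficient of $t^{n-i}$ in $\chi(\mathcal{A};t)$. $S(n,k)$ denotes the Stirling number of the second kind, the number of partitions of an $n$-element set into $k$ nonempty blocks. *)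

theory Defs
  imports "HOL-Analysis.Analysis" "HOL-Library.Function_Algebras"
          "HOL-Combinatorics.Stirling" "HOL-Computational_Algebra.Polynomial"
begin

text \<open>Vectors of R^n are modelled as functions nat => real supported on {1..n};
  the scalar multiplication is pointwise.\<close>

definition fscale :: "real \<Rightarrow> (nat \<Rightarrow> real) \<Rightarrow> (nat \<Rightarrow> real)" where
  "fscale c x = (\<lambda>j. c * x j)"

definition Rn :: "nat \<Rightarrow> (nat \<Rightarrow> real) set" where
  "Rn n = {x. \<forall>j. j \<notin> {1..n} \<longrightarrow> x j = 0}"

definition rk :: "nat \<Rightarrow> (nat \<Rightarrow> real) set set \<Rightarrow> nat" where
  "rk n S = n - vector_space.dim fscale (Rn n \<inter> \<Inter>S)"

definition char_poly :: "nat \<Rightarrow> (nat \<Rightarrow> real) set set \<Rightarrow> int poly" where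
  "char_poly n A = (\<Sum>S\<in>Pow A. (-1) ^ card S * monom 1 (rk n A - rk n S))"

definition betti :: "nat \<Rightarrow> (nat \<Rightarrow> real) set set \<Rightarrow> nat \<Rightarrow> nat" where
  "betti n A i = (if i \<le> n then nat \<bar>coeff (char_poly n A) (n - i)\<bar> else 0)"

definition hyp :: "nat \<Rightarrow> nat set \<Rightarrow> (nat \<Rightarrow> real) set" where
  "hyp n I = {x \<in> Rn n. (\<Sum>i\<in>I. x i) = 0}"

definition resonance :: "nat \<Rightarrow> (nat \<Rightarrow> real) set set" where
  "resonance n = {hyp n I | I. I \<subseteq> {1..n} \<and> I \<noteq> {}}"

end

theory Submission
  imports Defs
begin


interpretation FV: vector_space fscale
  by unfold_locales (auto simp: fscale_def algebra_simps fun_eq_iff)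

definition ev :: "nat \<Rightarrow> nat \<Rightarrow> real" where
  "ev j = (\<lambda>i. if i = j then 1 else 0)"

lemma fscale_apply[simp]: "fscale c x j = c * x j"
  by (simp add: fscale_def)

lemma subspace_Rn: "FV.subspace (Rn n)"
  unfolding FV.subspace_def Rn_def by (auto simp: zero_fun_def plus_fun_def)

lemma sum_fun_apply: "(\<Sum>i\<in>A. f i) j = (\<Sum>i\<in>A. f i j)" for f :: "'a \<Rightarrow> nat \<Rightarrow> real"
  by (induction A rule: infinite_finite_induct) auto

lemma Rn_span: "Rn n = FV.span (ev ` {1..n})"
proof
  show "Rn n \<subseteq> FV.span (ev ` {1..n})"
  proof
    fix x assume x: "x \<in> Rn n"
    have "x = (\<Sum>j\<in>{1..n}. fscale (x j) (ev j))"
    proof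
      fix i
      have "(\<Sum>j\<in>{1..n}. fscale (x j) (ev j)) i = (\<Sum>j\<in>{1..n}. if j = i then x j else 0)"
        unfolding sum_fun_apply fscale_apply by (rule sum.cong) (auto simp: ev_def)
      also have "\<dots> = x i" using x by (auto simp: Rn_def)
      finally show "x i = (\<Sum>j\<in>{1..n}. fscale (x j) (ev j)) i" by simp
    qed
    also have "\<dots> \<in> FV.span (ev ` {1..n})"
      by (intro FV.span_sum FV.span_scale FV.span_base) auto
    finally show "x \<in> FV.span (ev ` {1..n})" .
  qed
  show "FV.span (ev ` {1..n}) \<subseteq> Rn n"
    by (rule FV.span_minimal[OF _ subspace_Rn]) (auto simp: ev_def Rn_def)
qed

lemma ev_inj: "inj ev"
  by (auto simp: inj_def ev_def fun_eq_iff)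

lemma indep_ev: "FV.independent (ev ` A)" if "finite A"
proof -
  have "\<not> FV.dependent (ev ` A)"
  proof
    assume "FV.dependent (ev ` A)"
    moreover have "finite (ev ` A)" using that by simp
    ultimately obtain u where u: "\<exists>v\<in>ev ` A. u v \<noteq> 0" "(\<Sum>v\<in>ev ` A. fscale (u v) v) = 0"
      using FV.dependent_finite[of "ev ` A"] by blast
    then obtain j where j: "j \<in> A" "u (ev j) \<noteq> 0" by auto
    have "(\<Sum>v\<in>ev ` A. fscale (u v) v) j = (\<Sum>v\<in>ev ` A. u v * v j)"
      by (simp add: sum_fun_apply)
    also have "\<dots> = (\<Sum>i\<in>A. u (ev i) * ev i j)"
      by (subst sum.reindex) (auto intro: inj_on_subset[OF ev_inj])
    also have "\<dots> = (\<Sum>i\<in>A. if i = j then u (ev i) else 0)"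
      by (rule sum.cong) (auto simp: ev_def)
    also have "\<dots> = u (ev j)"
      using j that by simp
    finally show False using u(2) j by simp
  qed
  then show ?thesis by simp
qed

lemma dim_Rn: "FV.dim (Rn n) = n"
proof -
  have "FV.dim (Rn n) = FV.dim (ev ` {1..n})" by (simp add: Rn_span)
  also have "\<dots> = card (ev ` {1..n})" by (rule FV.dim_eq_card_independent[OF indep_ev]) simp
  also have "\<dots> = n" by (simp add: card_image inj_on_subset[OF ev_inj])
  finally show ?thesis .
qed

lemma basis_fin:
  assumes "U \<subseteq> Rn n"
  obtains B where "B \<subseteq> U" "FV.independent B" "U \<subseteq> FV.span B" "card B = FV.dim U" "finite B"
proof -
  obtain B where B: "B \<subseteq> U" "FV.independent B" "U \<subseteq> FV.span B" "card B = FV.dim U"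
    using FV.basis_exists by blast
  have "B \<subseteq> FV.span (ev ` {1..n})" using B(1) assms Rn_span by auto
  then have "finite B" using FV.independent_span_bound[of "ev ` {1..n}" B] B(2) by auto
  with B that show ?thesis by blast
qed

lemma dim_mono_Rn:
  assumes "U \<subseteq> W" "W \<subseteq> Rn n"
  shows "FV.dim U \<le> FV.dim W"
proof -
  obtain B where B: "B \<subseteq> W" "FV.independent B" "W \<subseteq> FV.span B" "card B = FV.dim W" "finite B"
    using basis_fin[OF assms(2)] .
  show ?thesis using FV.dim_le_card[of U B] B assms by auto
qed

lemma dim_le_n: "U \<subseteq> Rn n \<Longrightarrow> FV.dim U \<le> n"
  using dim_mono_Rn[of U "Rn n" n] dim_Rn by simp

lemma cut_functional:
  assumes add: "\<And>x y. \<phi> (x + y) = \<phi> x + \<phi> y" and sc: "\<And>c x. \<phi> (fscale c x) = c * \<phi> x"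
    and U: "FV.subspace U" "U \<subseteq> Rn n"
  shows "FV.subspace (U \<inter> {x. \<phi> x = 0})"
    and "U \<subseteq> {x. \<phi> x = 0} \<or> FV.dim (U \<inter> {x. \<phi> x = 0}) + 1 = FV.dim U"
proof -
  have z: "\<phi> 0 = 0" using sc[of 0 0] by (simp add: fscale_def zero_fun_def)
  show sub: "FV.subspace (U \<inter> {x. \<phi> x = 0})"
    using U(1) unfolding FV.subspace_def by (auto simp: add sc z)
  show "U \<subseteq> {x. \<phi> x = 0} \<or> FV.dim (U \<inter> {x. \<phi> x = 0}) + 1 = FV.dim U"
  proof (cases "U \<subseteq> {x. \<phi> x = 0}")
    case False
    then obtain w where w: "w \<in> U" "\<phi> w \<noteq> 0" by auto
    let ?K = "U \<inter> {x. \<phi> x = 0}"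
    obtain B where B: "B \<subseteq> ?K" "FV.independent B" "?K \<subseteq> FV.span B" "card B = FV.dim ?K" "finite B"
      using basis_fin[of ?K n] U by auto
    have spB: "FV.span B \<subseteq> ?K" using FV.span_minimal[OF B(1) sub] .
    have wB: "w \<notin> FV.span B" using spB w by auto
    have ind: "FV.independent (insert w B)" using B(2) wB
      by (simp add: FV.independent_insert)
    have "FV.span (insert w B) = FV.span U"
    proof
      show "FV.span (insert w B) \<subseteq> FV.span U"
        using B(1) w by (intro FV.span_mono) auto
      show "FV.span U \<subseteq> FV.span (insert w B)"
      proof (rule FV.span_minimal[OF _ FV.subspace_span], rule subsetI)
        fix u assume u: "u \<in> U"
        define c where "c = \<phi> u / \<phi> w"
        have "u - fscale c w \<in> ?K"
        proof -
          have "u - fscale c w \<in> U" using u w U(1) by (simp add: FV.subspace_diff FV.subspace_scale)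
          moreover have "\<phi> (u - fscale c w) = 0"
          proof -
            have "\<phi> u = \<phi> (u - fscale c w) + \<phi> (fscale c w)" by (metis add diff_add_cancel)
            then show ?thesis using w(2) by (simp add: sc c_def)
          qed
          ultimately show ?thesis by simp
        qed
        then have "u - fscale c w \<in> FV.span (insert w B)"
          using B(3) FV.span_mono[of B "insert w B"] by auto
        moreover have "fscale c w \<in> FV.span (insert w B)"
          by (intro FV.span_scale FV.span_base) simp
        ultimately have "(u - fscale c w) + fscale c w \<in> FV.span (insert w B)"
          by (rule FV.span_add)
        then show "u \<in> FV.span (insert w B)" by simp
      qed
    qed
    then have "FV.dim U = card (insert w B)"
      using FV.dim_eq_card[of "insert w B" U] ind by simp
    also have "\<dots> = card B + 1" by (metis FV.span_base card_insert_disjoint B(5) wB Suc_eq_plus1)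
    finally show ?thesis using B(4) by simp
  qed simp
qed


definition cuts :: "nat \<Rightarrow> (nat \<Rightarrow> real) set \<Rightarrow> bool" where
  "cuts n h \<longleftrightarrow> (\<forall>U. FV.subspace U \<and> U \<subseteq> Rn n \<longrightarrow>
     FV.subspace (U \<inter> h) \<and> (U \<subseteq> h \<or> FV.dim (U \<inter> h) + 1 = FV.dim U))"

definition amb :: "nat \<Rightarrow> (nat \<Rightarrow> real) set \<Rightarrow> bool" where
  "amb n W \<longleftrightarrow> FV.subspace W \<and> W \<subseteq> Rn n"

lemma amb_cut:
  assumes "amb n W" "cuts n h"
  shows "amb n (W \<inter> h)" "W \<subseteq> h \<or> FV.dim (W \<inter> h) + 1 = FV.dim W"
  using assms unfolding amb_def cuts_def by auto

lemma pow_split: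
  assumes "C \<subseteq> E"
  shows "(\<Sum>S\<in>Pow E. g S) = (\<Sum>A\<in>Pow (E - C). \<Sum>T\<in>Pow C. g (A \<union> T))"
proof -
  have inj: "inj_on (\<lambda>(A,T). A \<union> T) (Pow (E - C) \<times> Pow C)"
  proof (rule inj_onI, clarify)
    fix A T A' T' assume h: "A \<subseteq> E - C" "T \<subseteq> C" "A' \<subseteq> E - C" "T' \<subseteq> C" "A \<union> T = A' \<union> T'"
    have "A = (A \<union> T) - C" "A' = (A' \<union> T') - C" "T = (A \<union> T) \<inter> C" "T' = (A' \<union> T') \<inter> C"
      using h(1-4) by auto
    then show "A = A' \<and> T = T'" using h(5) by metis
  qed
  have img: "(\<lambda>(A,T). A \<union> T) ` (Pow (E - C) \<times> Pow C) = Pow E"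
  proof
    show "(\<lambda>(A,T). A \<union> T) ` (Pow (E - C) \<times> Pow C) \<subseteq> Pow E" using assms by auto
    show "Pow E \<subseteq> (\<lambda>(A,T). A \<union> T) ` (Pow (E - C) \<times> Pow C)"
    proof
      fix S assume "S \<in> Pow E"
      then have "S = (\<lambda>(A,T). A \<union> T) (S - C, S \<inter> C)" "(S - C, S \<inter> C) \<in> Pow (E - C) \<times> Pow C" by auto
      then show "S \<in> (\<lambda>(A,T). A \<union> T) ` (Pow (E - C) \<times> Pow C)" by blast
    qed
  qed
  have bij: "bij_betw (\<lambda>(A,T). A \<union> T) (Pow (E - C) \<times> Pow C) (Pow E)"
    using inj img by (simp add: bij_betw_def)
  have "(\<Sum>S\<in>Pow E. g S) = (\<Sum>x\<in>Pow (E - C) \<times> Pow C. g (case x of (A, T) \<Rightarrow> A \<union> T))"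
    using sum.reindex_bij_betw[OF bij, of g] by simp
  also have "\<dots> = (\<Sum>A\<in>Pow (E - C). \<Sum>T\<in>Pow C. g (A \<union> T))"
    by (simp add: sum.cartesian_product split_def)
  finally show ?thesis .
qed

lemma alt_sum_pow:
  assumes "finite C" "C \<noteq> {}"
  shows "(\<Sum>T\<in>Pow C. (-1::int) ^ card T) = 0"
proof -
  obtain x where x: "x \<in> C" using assms by auto
  define C' where "C' = C - {x}"
  have C: "C = insert x C'" "x \<notin> C'" "finite C'" using x assms by (auto simp: C'_def)
  have "Pow C = Pow C' \<union> insert x ` Pow C'" by (simp add: C Pow_insert)
  moreover have "Pow C' \<inter> insert x ` Pow C' = {}" using C by auto
  moreover have "inj_on (insert x) (Pow C')"
  proof (rule inj_onI)
    fix A B assume "A \<in> Pow C'" "B \<in> Pow C'" "insert x A = insert x B"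
    then show "A = B" using C(2) by (metis Diff_insert_absorb PowD subsetD)
  qed
  ultimately have "(\<Sum>T\<in>Pow C. (-1::int) ^ card T) =
      (\<Sum>T\<in>Pow C'. (-1::int) ^ card T) + (\<Sum>T\<in>Pow C'. (-1::int) ^ card (insert x T))"
    using C by (simp add: sum.union_disjoint sum.reindex)
  also have "(\<Sum>T\<in>Pow C'. (-1::int) ^ card (insert x T)) = - (\<Sum>T\<in>Pow C'. (-1::int) ^ card T)"
  proof -
    have "(-1::int) ^ card (insert x T) = - ((-1) ^ card T)" if "T \<in> Pow C'" for T
    proof -
      have "finite T" "x \<notin> T" using that C finite_subset by auto
      then show ?thesis by simp
    qed
    then show ?thesis by (simp add: sum_negf[symmetric])
  qed
  finally show ?thesis by simp
qed

locale arr =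
  fixes n :: nat and \<phi> :: "(nat \<Rightarrow> real) set \<Rightarrow> bool" and f :: "'e \<Rightarrow> (nat \<Rightarrow> real) set"
begin

definition VV where "VV W S = W \<inter> \<Inter>(f ` S)"

definition a :: "(nat \<Rightarrow> real) set \<Rightarrow> 'e set \<Rightarrow> nat \<Rightarrow> int" where
  "a W E j = (\<Sum>S\<in>Pow E. if \<phi> (VV W S) \<and> FV.dim (VV W S) = j then (-1) ^ card S else 0)"

definition ind :: "(nat \<Rightarrow> real) set \<Rightarrow> 'e set \<Rightarrow> nat \<Rightarrow> nat" where
  "ind W E j = card {T\<in>Pow E. \<phi> (VV W T) \<and> FV.dim (VV W T) = j \<and> card T + j = FV.dim W}"

lemma VV_empty[simp]: "VV W {} = W" by (simp add: VV_def)

lemma VV_insert: "VV W (insert x S) = VV (W \<inter> f x) S"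
  by (auto simp: VV_def)

lemma VV_insert': "VV W (insert x S) = VV W S \<inter> f x"
  by (auto simp: VV_def)

lemma amb_VV:
  assumes "finite S" "\<forall>e\<in>S. cuts n (f e)" "amb n W"
  shows "amb n (VV W S)"
  using assms by (induction S rule: finite_induct) (auto simp: VV_insert' amb_cut)

lemma VV_sub: "VV W S \<subseteq> W" by (auto simp: VV_def)

lemma a_zero:
  assumes "finite E" "\<forall>e\<in>E. cuts n (f e)" "amb n W" "FV.dim W < j"
  shows "a W E j = 0"
proof -
  have "FV.dim (VV W S) \<noteq> j" if "S \<in> Pow E" for S
  proof -
    have "FV.dim (VV W S) \<le> FV.dim W"
      using dim_mono_Rn[OF VV_sub, of W n S] assms(3) by (auto simp: amb_def)
    then show ?thesis using assms(4) by simp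
  qed
  then show ?thesis unfolding a_def by (intro sum.neutral) auto
qed

lemma DR:
  assumes "finite E" "C \<subseteq> E" "C \<noteq> {}" "\<forall>c\<in>C. W \<inter> f c = U"
  shows "a W E j = a W (E - C) j - a U (E - C) j"
proof -
  define g where "g = (\<lambda>X S. if \<phi> (VV X S) \<and> FV.dim (VV X S) = j then (-1::int) ^ card S else 0)"
  have fC: "finite C" using assms finite_subset by blast
  have inner: "(\<Sum>T\<in>Pow C. g W (A \<union> T)) = g W A - g U A" if A: "A \<in> Pow (E - C)" for A
  proof -
    have fA: "finite A" using A assms(1) finite_subset by auto
    have "g W (A \<union> T) = g U A * (-1) ^ card T" if T: "T \<in> Pow C - {{}}" for T
    proof -
      have "W \<inter> \<Inter>(f ` T) = U" using T assms(4) by auto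
      then have "VV W (A \<union> T) = VV U A" unfolding VV_def by auto
      moreover have "card (A \<union> T) = card A + card T"
        using A T fA fC finite_subset by (intro card_Un_disjoint) auto
      ultimately show ?thesis by (simp add: g_def power_add)
    qed
    then have "(\<Sum>T\<in>Pow C - {{}}. g W (A \<union> T)) = g U A * (\<Sum>T\<in>Pow C - {{}}. (-1) ^ card T)"
      by (simp add: sum_distrib_left)
    also have "(\<Sum>T\<in>Pow C - {{}}. (-1::int) ^ card T) = (\<Sum>T\<in>Pow C. (-1) ^ card T) - 1"
      using fC by (subst sum.remove[of _ "{}"]) auto
    also have "\<dots> = -1" using alt_sum_pow[OF fC assms(3)] by simp
    finally have "(\<Sum>T\<in>Pow C - {{}}. g W (A \<union> T)) = - g U A" by simp
    moreover have "(\<Sum>T\<in>Pow C. g W (A \<union> T)) = g W A + (\<Sum>T\<in>Pow C - {{}}. g W (A \<union> T))"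
      using fC by (subst sum.remove[of _ "{}"]) auto
    ultimately show ?thesis by simp
  qed
  have "a W E j = (\<Sum>S\<in>Pow E. g W S)" by (simp add: a_def g_def)
  also have "\<dots> = (\<Sum>A\<in>Pow (E - C). \<Sum>T\<in>Pow C. g W (A \<union> T))" by (rule pow_split[OF assms(2)])
  also have "\<dots> = (\<Sum>A\<in>Pow (E - C). g W A - g U A)" by (rule sum.cong) (use inner in auto)
  also have "\<dots> = a W (E - C) j - a U (E - C) j" by (simp add: sum_subtractf a_def g_def)
  finally show ?thesis .
qed

lemma ind_step:
  assumes "finite E" "e \<in> E" "E' \<subseteq> E - {e}" "U = W \<inter> f e" "FV.dim U + 1 = FV.dim W"
  shows "ind W E' j + ind U E' j \<le> ind W E j"
proof -
  let ?S = "{T\<in>Pow E. \<phi> (VV W T) \<and> FV.dim (VV W T) = j \<and> card T + j = FV.dim W}"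
  let ?S1 = "{T\<in>Pow E'. \<phi> (VV W T) \<and> FV.dim (VV W T) = j \<and> card T + j = FV.dim W}"
  let ?S2 = "{T\<in>Pow E'. \<phi> (VV U T) \<and> FV.dim (VV U T) = j \<and> card T + j = FV.dim U}"
  have fE': "finite E'" using assms finite_subset by blast
  have inj: "inj_on (insert e) ?S2"
  proof (rule inj_onI)
    fix A B assume "A \<in> ?S2" "B \<in> ?S2" "insert e A = insert e B"
    moreover have "e \<notin> A" "e \<notin> B" using calculation(1,2) assms(3) by auto
    ultimately show "A = B" by (metis Diff_insert_absorb)
  qed
  have sub1: "?S1 \<subseteq> ?S" using assms(3) by auto
  have sub2: "insert e ` ?S2 \<subseteq> ?S"
  proof
    fix X assume "X \<in> insert e ` ?S2"
    then obtain T where T: "T \<in> ?S2" "X = insert e T" by auto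
    have "e \<notin> T" using T assms(3) by auto
    moreover have "finite T" using T fE' finite_subset by auto
    ultimately have "card X = card T + 1" using T by simp
    moreover have "VV W X = VV U T" using T assms(4) by (simp add: VV_insert)
    ultimately show "X \<in> ?S" using T assms by auto
  qed
  have disj: "?S1 \<inter> insert e ` ?S2 = {}" using assms(3) by auto
  have fS: "finite ?S" using assms(1) by simp
  have ci: "card (insert e ` ?S2) = card ?S2" by (rule card_image[OF inj])
  have "ind W E' j + ind U E' j = card ?S1 + card (insert e ` ?S2)"
    unfolding ci by (simp add: ind_def)
  also have "\<dots> = card (?S1 \<union> insert e ` ?S2)"
    using disj fS sub1 sub2 finite_subset by (intro card_Un_disjoint[symmetric]) auto
  also have "\<dots> \<le> card ?S" using sub1 sub2 fS by (intro card_mono) auto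
  finally show ?thesis by (simp add: ind_def)
qed

lemma a_empty: "a W {} j = (if \<phi> W \<and> FV.dim W = j then 1 else 0)"
  unfolding a_def Pow_empty by simp

lemma ind_empty: "ind W {} j = (if \<phi> W \<and> FV.dim W = j then 1 else 0)"
proof -
  have "{T\<in>Pow {}. \<phi> (VV W T) \<and> FV.dim (VV W T) = j \<and> card T + j = FV.dim W} =
        (if \<phi> W \<and> FV.dim W = j then {{}} else {})" by auto
  then show ?thesis by (simp add: ind_def)
qed

lemma sign_bound:
  assumes "finite E" "\<forall>e\<in>E. cuts n (f e)" "amb n W" "j \<le> FV.dim W"
  shows "0 \<le> (-1) ^ (FV.dim W - j) * a W E j \<and> \<bar>a W E j\<bar> \<le> int (ind W E j)"
  using assms
proof (induction "card E" arbitrary: E W j rule: less_induct)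
  case less
  show ?case
  proof (cases "E = {}")
    case True
    then show ?thesis by (simp add: a_empty ind_empty)
  next
    case False
    then obtain e where e: "e \<in> E" by auto
    define U where "U = W \<inter> f e"
    define C where "C = {c\<in>E. W \<inter> f c = U}"
    have C: "C \<subseteq> E" "C \<noteq> {}" "\<forall>c\<in>C. W \<inter> f c = U" "e \<in> C" using e by (auto simp: C_def U_def)
    have DR': "a W E j = a W (E - C) j - a U (E - C) j" by (rule DR[OF less.prems(1) C(1-3)])
    have lt: "card (E - C) < card E" using C less.prems(1)
      by (intro psubset_card_mono) auto
    have fE': "finite (E - C)" using less.prems(1) by simp
    have cE': "\<forall>e\<in>E - C. cuts n (f e)" using less.prems(2) by auto
    have ambU: "amb n U" using amb_cut(1)[OF less.prems(3)] less.prems(2) e by (simp add: U_def)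
    have cut: "W \<subseteq> f e \<or> FV.dim U + 1 = FV.dim W"
      using amb_cut(2)[OF less.prems(3)] less.prems(2) e by (simp add: U_def)
    show ?thesis
    proof (cases "W \<subseteq> f e")
      case True
      then have "U = W" by (auto simp: U_def)
      then show ?thesis using DR' by simp
    next
      case nl: False
      with cut have dU: "FV.dim U + 1 = FV.dim W" by simp
      have IHW: "0 \<le> (-1) ^ (FV.dim W - j) * a W (E - C) j \<and> \<bar>a W (E - C) j\<bar> \<le> int (ind W (E - C) j)"
        using less.hyps[OF lt fE' cE' less.prems(3) less.prems(4)] .
      have IU: "0 \<le> - ((-1) ^ (FV.dim W - j)) * a U (E - C) j \<and> \<bar>a U (E - C) j\<bar> \<le> int (ind U (E - C) j)"
      proof (cases "j \<le> FV.dim U")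
        case True
        have "FV.dim W - j = Suc (FV.dim U - j)" using True dU by simp
        then show ?thesis using less.hyps[OF lt fE' cE' ambU True] by simp
      next
        case False
        then show ?thesis using a_zero[OF fE' cE' ambU] by simp
      qed
      have sq: "((-1::int) ^ (FV.dim W - j)) * ((-1) ^ (FV.dim W - j)) = 1"
        by (simp add: power_mult_distrib[symmetric])
      have absW: "\<bar>a W (E - C) j\<bar> = (-1) ^ (FV.dim W - j) * a W (E - C) j"
        using IHW by (cases "even (FV.dim W - j)") auto
      have absU: "\<bar>a U (E - C) j\<bar> = - ((-1) ^ (FV.dim W - j)) * a U (E - C) j"
        using IU by (cases "even (FV.dim W - j)") auto
      have s: "(-1) ^ (FV.dim W - j) * a W E j = \<bar>a W (E - C) j\<bar> + \<bar>a U (E - C) j\<bar>"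
        unfolding DR' right_diff_distrib using absW absU by linarith
      have "ind W (E - C) j + ind U (E - C) j \<le> ind W E j"
        by (rule ind_step[OF less.prems(1) e _ U_def dU]) (use C in auto)
      then have "\<bar>a W E j\<bar> \<le> int (ind W E j)"
        using s IHW IU by (cases "even (FV.dim W - j)") auto
      then show ?thesis using s by simp
    qed
  qed
qed

end


declare fscale_apply[simp del]

context arr begin

lemma dim_lower:
  assumes "finite T" "\<forall>e\<in>T. cuts n (f e)" "amb n W"
  shows "FV.dim W \<le> FV.dim (VV W T) + card T"
  using assms
proof (induction T rule: finite_induct)
  case (insert x T)
  have amb: "amb n (VV W T)" using amb_VV[of T W] insert by auto
  have "VV W T \<subseteq> f x \<or> FV.dim (VV W T \<inter> f x) + 1 = FV.dim (VV W T)"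
    using amb_cut(2)[OF amb] insert by auto
  then have "FV.dim (VV W T) \<le> FV.dim (VV W (insert x T)) + 1"
    by (auto simp: VV_insert' Int_absorb2)
  then show ?case using insert by auto
qed simp

lemma pos:
  assumes "finite E" "\<forall>e\<in>E. cuts n (f e)" "amb n W" "\<forall>e\<in>E. \<not> W \<subseteq> f e"
    "T \<subseteq> E" "\<phi> (VV W T)" "card T + FV.dim (VV W T) = FV.dim W"
  shows "a W E (FV.dim (VV W T)) \<noteq> 0"
  using assms
proof (induction "card E" arbitrary: E W T rule: less_induct)
  case less
  show ?case
  proof (cases "E = {}")
    case True
    then have "T = {}" using less.prems(5) by auto
    then show ?thesis using True less.prems(6) by (simp add: a_empty)
  next
    case False
    then obtain e where e: "e \<in> E" by auto
    define U where "U = W \<inter> f e"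
    define C where "C = {c\<in>E. W \<inter> f c = U}"
    define j where "j = FV.dim (VV W T)"
    have C: "C \<subseteq> E" "C \<noteq> {}" "\<forall>c\<in>C. W \<inter> f c = U" "e \<in> C" using e by (auto simp: C_def U_def)
    have DR': "a W E j = a W (E - C) j - a U (E - C) j" by (rule DR[OF less.prems(1) C(1-3)])
    have lt: "card (E - C) < card E" using C less.prems(1)
      by (intro psubset_card_mono) auto
    have fE': "finite (E - C)" using less.prems(1) by simp
    have cE': "\<forall>e\<in>E - C. cuts n (f e)" using less.prems(2) by auto
    have ambU: "amb n U" using amb_cut(1)[OF less.prems(3)] less.prems(2) e by (simp add: U_def)
    have dU: "FV.dim U + 1 = FV.dim W"
      using amb_cut(2)[OF less.prems(3), of "f e"] less.prems(2,4) e by (auto simp: U_def)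
    have jW: "j \<le> FV.dim W" using less.prems(7) by (simp add: j_def)
    have sbW: "0 \<le> (-1) ^ (FV.dim W - j) * a W (E - C) j"
      using sign_bound[OF fE' cE' less.prems(3) jW] by simp
    have sbU: "0 \<le> - ((-1) ^ (FV.dim W - j)) * a U (E - C) j"
    proof (cases "j \<le> FV.dim U")
      case True
      have "FV.dim W - j = Suc (FV.dim U - j)" using True dU by simp
      then show ?thesis using sign_bound[OF fE' cE' ambU True] by simp
    next
      case False
      then show ?thesis using a_zero[OF fE' cE' ambU] by simp
    qed
    have key: "a W (E - C) j \<noteq> 0 \<or> (j \<le> FV.dim U \<and> a U (E - C) j \<noteq> 0)"
    proof (cases "T \<inter> C = {}")
      case True
      then have "T \<subseteq> E - C" using less.prems(5) by auto
      then have "a W (E - C) j \<noteq> 0"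
        using less.hyps[OF lt fE' cE' less.prems(3) _ _ less.prems(6,7)] less.prems(4)
        by (auto simp: j_def)
      then show ?thesis by simp
    next
      case False
      then obtain c where c: "c \<in> T" "c \<in> C" by auto
      define T' where "T' = T - {c}"
      have fT: "finite T" using less.prems(1,5) finite_subset by auto
      have Tc: "T = insert c T'" using c by (auto simp: T'_def)
      have VT: "VV W T = VV U T'" using c C(3) Tc by (simp add: VV_insert)
      have cT: "card T = card T' + 1" using fT c unfolding T'_def
        by (metis Suc_eq_plus1 card_Suc_Diff1)
      have cuT': "\<forall>e\<in>T'. cuts n (f e)" using less.prems(2,5) by (auto simp: T'_def)
      have T'C: "T' \<inter> C = {}"
      proof (rule ccontr)
        assume "T' \<inter> C \<noteq> {}"
        then obtain c' where c': "c' \<in> T'" "c' \<in> C" by auto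
        have "U \<inter> f c' = U" using C(3) c'(2) by (auto simp: U_def)
        then have "VV U T' = VV U (T' - {c'})"
          using c'(1) by (metis VV_insert insert_Diff)
        moreover have "FV.dim U \<le> FV.dim (VV U (T' - {c'})) + card (T' - {c'})"
          using dim_lower[OF _ _ ambU, of "T' - {c'}"] cuT' fT by (auto simp: T'_def)
        moreover have "card (T' - {c'}) + 1 = card T'"
          using c'(1) fT by (metis Suc_eq_plus1 card_Suc_Diff1 finite_Diff T'_def)
        ultimately show False using VT cT less.prems(7) dU by (simp add: j_def)
      qed
      have T'E: "T' \<subseteq> E - C" using T'C less.prems(5) by (auto simp: T'_def)
      have lU: "\<forall>e'\<in>E - C. \<not> U \<subseteq> f e'"
      proof (intro ballI notI)
        fix e' assume e': "e' \<in> E - C" and sub: "U \<subseteq> f e'"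
        define U2 where "U2 = W \<inter> f e'"
        have ne: "U2 \<noteq> U" using e' by (auto simp: C_def U2_def)
        have amb2: "amb n U2" using amb_cut(1)[OF less.prems(3)] less.prems(2) e' by (simp add: U2_def)
        have d2: "FV.dim U2 + 1 = FV.dim W"
          using amb_cut(2)[OF less.prems(3), of "f e'"] less.prems(2,4) e' by (auto simp: U2_def)
        have "U2 \<inter> f e = U" using sub by (auto simp: U_def U2_def)
        moreover have "U2 \<subseteq> f e \<or> FV.dim (U2 \<inter> f e) + 1 = FV.dim U2"
          using amb_cut(2)[OF amb2] less.prems(2) e by auto
        ultimately show False using ne d2 dU by auto
      qed
      have "a U (E - C) (FV.dim (VV U T')) \<noteq> 0"
        using less.hyps[OF lt fE' cE' ambU lU T'E] less.prems(6,7) VT cT dU by simp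
      moreover have "j \<le> FV.dim U" using VT cT less.prems(7) dU by (simp add: j_def)
      ultimately show ?thesis using VT by (simp add: j_def)
    qed
    have "a W E j \<noteq> 0"
    proof
      assume "a W E j = 0"
      then have "(-1) ^ (FV.dim W - j) * a W (E - C) j + (- ((-1) ^ (FV.dim W - j)) * a U (E - C) j) = 0"
        using DR' by (simp add: algebra_simps)
      then have z1: "(-1) ^ (FV.dim W - j) * a W (E - C) j = 0"
        and z2: "(- ((-1) ^ (FV.dim W - j))) * a U (E - C) j = 0"
        using sbW sbU by linarith+
      from z1 have "a W (E - C) j = 0" by simp
      moreover from z2 have "a U (E - C) j = 0" by simp
      ultimately show False using key by simp
    qed
    then show ?thesis by (simp add: j_def)
  qed
qed

end


declare fscale_apply[simp del]

definition Fam :: "nat \<Rightarrow> nat set set" where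
  "Fam m = {I. I \<subseteq> {1..m} \<and> I \<noteq> {}}"

definition phisep :: "nat \<Rightarrow> (nat \<Rightarrow> real) set \<Rightarrow> bool" where
  "phisep m X \<longleftrightarrow> (\<forall>p\<in>{1..m}. ev p \<notin> X) \<and> (\<forall>p\<in>{1..m}. \<forall>q\<in>{1..m}. p \<noteq> q \<longrightarrow> ev p - ev q \<notin> X)"

definition sepF :: "nat \<Rightarrow> nat set set \<Rightarrow> bool" where
  "sepF m G \<longleftrightarrow> (\<forall>p\<in>{1..m}. \<exists>I\<in>G. p \<in> I) \<and>
     (\<forall>p\<in>{1..m}. \<forall>q\<in>{1..m}. p \<noteq> q \<longrightarrow> (\<exists>I\<in>G. (p \<in> I) \<noteq> (q \<in> I)))"

definition Vn :: "nat \<Rightarrow> nat set set \<Rightarrow> (nat \<Rightarrow> real) set" where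
  "Vn m G = Rn m \<inter> \<Inter>(hyp m ` G)"

definition D :: "nat \<Rightarrow> nat \<Rightarrow> int" where
  "D i k = (\<Sum>G\<in>Pow (Fam (k - 1)).
     if sepF (k - 1) G \<and> FV.dim (Vn (k - 1) G) + i = k - 1 then (-1) ^ card G else 0)"

definition SG :: "nat \<Rightarrow> nat \<Rightarrow> nat set set set" where
  "SG i m = {G\<in>Pow (Fam m). card G = i \<and> sepF m G}"

lemma finite_Fam[simp]: "finite (Fam m)"
  by (rule finite_subset[of _ "Pow {1..m}"]) (auto simp: Fam_def)

lemma Fam_finite: "I \<in> Fam m \<Longrightarrow> finite I"
  by (auto simp: Fam_def intro: finite_subset)

lemma hyp_eq: "U \<subseteq> Rn n \<Longrightarrow> U \<inter> hyp n I = U \<inter> {x. (\<Sum>i\<in>I. x i) = 0}"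
  by (auto simp: hyp_def)

lemma hyp_cuts: "cuts n (hyp n I)"
  unfolding cuts_def
proof (intro allI impI)
  fix U assume U: "FV.subspace U \<and> U \<subseteq> Rn n"
  have add: "\<And>x y. (\<Sum>i\<in>I. (x + y) i) = (\<Sum>i\<in>I. x i) + (\<Sum>i\<in>I. y i)"
    by (simp add: sum.distrib)
  have sc: "\<And>c x. (\<Sum>i\<in>I. fscale c x i) = c * (\<Sum>i\<in>I. x i)"
    by (simp add: fscale_apply sum_distrib_left)
  note cf = cut_functional[of "\<lambda>x. \<Sum>i\<in>I. x i", OF add sc, of U n]
  show "FV.subspace (U \<inter> hyp n I) \<and> (U \<subseteq> hyp n I \<or> FV.dim (U \<inter> hyp n I) + 1 = FV.dim U)"
    using cf U hyp_eq[of U n I] by (auto simp: hyp_def)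
qed

lemma ev_Rn: "p \<in> {1..m} \<Longrightarrow> ev p \<in> Rn m"
  by (auto simp: ev_def Rn_def)

lemma sum_ev: "finite I \<Longrightarrow> (\<Sum>i\<in>I. ev p i) = (if p \<in> I then 1 else 0)"
  by (simp add: ev_def)

lemma ev_hyp: "I \<in> Fam m \<Longrightarrow> p \<in> {1..m} \<Longrightarrow> ev p \<in> hyp m I \<longleftrightarrow> p \<notin> I"
  using Fam_finite[of I m] by (auto simp: hyp_def ev_Rn sum_ev)

lemma evd_hyp: "I \<in> Fam m \<Longrightarrow> p \<in> {1..m} \<Longrightarrow> q \<in> {1..m} \<Longrightarrow> p \<noteq> q \<Longrightarrow>
    ev p - ev q \<in> hyp m I \<longleftrightarrow> (p \<in> I \<longleftrightarrow> q \<in> I)"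
proof -
  assume a: "I \<in> Fam m" "p \<in> {1..m}" "q \<in> {1..m}" "p \<noteq> q"
  have "ev p - ev q \<in> Rn m" using a by (auto simp: ev_def Rn_def)
  moreover have "(\<Sum>i\<in>I. (ev p - ev q) i) = (if p \<in> I then 1 else 0) - (if q \<in> I then 1 else 0)"
    using Fam_finite[OF a(1)] by (simp add: sum_subtractf sum_ev)
  ultimately show ?thesis by (auto simp: hyp_def)
qed

lemma Vn_mem: "x \<in> Vn m G \<longleftrightarrow> x \<in> Rn m \<and> (\<forall>I\<in>G. x \<in> hyp m I)"
  by (simp add: Vn_def)

lemma sep_iff:
  assumes "G \<subseteq> Fam m"
  shows "sepF m G \<longleftrightarrow> phisep m (Vn m G)"
proof -
  have 1: "(ev p \<notin> Vn m G) = (\<exists>I\<in>G. p \<in> I)" if "p \<in> {1..m}" for p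
  proof -
    have "(ev p \<in> Vn m G) = (\<forall>I\<in>G. ev p \<in> hyp m I)" unfolding Vn_mem using ev_Rn[OF that] by simp
    also have "\<dots> = (\<forall>I\<in>G. p \<notin> I)"
      by (rule ball_cong[OF refl]) (use ev_hyp[of _ m p] that assms in auto)
    finally show ?thesis by simp
  qed
  have 2: "(ev p - ev q \<notin> Vn m G) = (\<exists>I\<in>G. (p \<in> I) \<noteq> (q \<in> I))"
    if "p \<in> {1..m}" "q \<in> {1..m}" "p \<noteq> q" for p q
  proof -
    have r: "ev p - ev q \<in> Rn m" using that by (auto simp: ev_def Rn_def)
    have "(ev p - ev q \<in> Vn m G) = (\<forall>I\<in>G. ev p - ev q \<in> hyp m I)" unfolding Vn_mem using r by simp
    also have "\<dots> = (\<forall>I\<in>G. (p \<in> I) = (q \<in> I))"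
      by (rule ball_cong[OF refl]) (use evd_hyp[of _ m p q] that assms in auto)
    finally show ?thesis by simp
  qed
  have A: "(\<forall>p\<in>{1..m}. \<exists>I\<in>G. p \<in> I) \<longleftrightarrow> (\<forall>p\<in>{1..m}. ev p \<notin> Vn m G)"
    by (rule ball_cong[OF refl]) (simp add: 1)
  have B: "(\<forall>p\<in>{1..m}. \<forall>q\<in>{1..m}. p \<noteq> q \<longrightarrow> (\<exists>I\<in>G. (p \<in> I) \<noteq> (q \<in> I))) \<longleftrightarrow>
      (\<forall>p\<in>{1..m}. \<forall>q\<in>{1..m}. p \<noteq> q \<longrightarrow> ev p - ev q \<notin> Vn m G)"
    by (intro ball_cong[OF refl] imp_cong[OF refl]) (simp add: 2)
  show ?thesis unfolding sepF_def phisep_def A B ..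
qed

lemma amb_Rn: "amb m (Rn m)"
  by (simp add: amb_def subspace_Rn)

lemma VV_Vn: "arr.VV f (Rn m) G = Rn m \<inter> \<Inter>(f ` G)"
  by (simp add: arr.VV_def)

lemma D_eq:
  assumes "i \<le> m"
  shows "D i (Suc m) = arr.a (phisep m) (hyp m) (Rn m) (Fam m) (m - i)"
  unfolding D_def arr.a_def diff_Suc_1
proof (rule sum.cong[OF refl])
  fix G assume G: "G \<in> Pow (Fam m)"
  have d: "FV.dim (Vn m G) \<le> m" using dim_le_n[of "Vn m G" m] by (auto simp: Vn_def)
  have V: "arr.VV (hyp m) (Rn m) G = Vn m G" by (simp add: VV_Vn Vn_def)
  have S: "sepF m G = phisep m (Vn m G)" using sep_iff[of G m] G by blast
  have E: "(FV.dim (Vn m G) + i = m) = (FV.dim (Vn m G) = m - i)" using d assms by linarith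
  show "(if sepF m G \<and> FV.dim (Vn m G) + i = m then (-1) ^ card G else 0) =
    (if phisep m (arr.VV (hyp m) (Rn m) G) \<and> FV.dim (arr.VV (hyp m) (Rn m) G) = m - i then (-1) ^ card G else 0)"
    unfolding V S E ..
qed

lemma D_zero_small: "m < i \<Longrightarrow> D i (Suc m) = 0"
  unfolding D_def by (intro sum.neutral) auto

lemma sb_Rn:
  assumes "i \<le> m"
  shows "0 \<le> (-1) ^ i * arr.a (phisep m) (hyp m) (Rn m) (Fam m) (m - i) \<and>
    \<bar>arr.a (phisep m) (hyp m) (Rn m) (Fam m) (m - i)\<bar> \<le> int (arr.ind (phisep m) (hyp m) (Rn m) (Fam m) (m - i))"
proof -
  have c: "\<forall>e\<in>Fam m. cuts m (hyp m e)" using hyp_cuts by blast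
  have j: "m - i \<le> FV.dim (Rn m)" using dim_Rn by simp
  have e: "FV.dim (Rn m) - (m - i) = i" using dim_Rn assms by simp
  show ?thesis using arr.sign_bound[OF finite_Fam c amb_Rn j, of "phisep m"] unfolding e .
qed

lemma D_sign: "0 \<le> (-1) ^ i * D i (Suc m)"
proof (cases "i \<le> m")
  case True
  show ?thesis unfolding D_eq[OF True] using sb_Rn[OF True] by blast
next
  case False
  then have "D i (Suc m) = 0" using D_zero_small[of m i] by linarith
  then show ?thesis by (simp only: mult_zero_right order_refl)
qed

lemma ind_SG:
  assumes "i \<le> m"
  shows "arr.ind (phisep m) (hyp m) (Rn m) (Fam m) (m - i) \<le> card (SG i m)"
  unfolding arr.ind_def
proof (rule card_mono)
  show "finite (SG i m)" by (simp add: SG_def)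
  show "{T \<in> Pow (Fam m). phisep m (arr.VV (hyp m) (Rn m) T) \<and> FV.dim (arr.VV (hyp m) (Rn m) T) = m - i \<and>
      card T + (m - i) = FV.dim (Rn m)} \<subseteq> SG i m"
  proof
    fix T assume T: "T \<in> {T \<in> Pow (Fam m). phisep m (arr.VV (hyp m) (Rn m) T) \<and> FV.dim (arr.VV (hyp m) (Rn m) T) = m - i \<and>
      card T + (m - i) = FV.dim (Rn m)}"
    have V: "arr.VV (hyp m) (Rn m) T = Vn m T" by (simp add: VV_Vn Vn_def)
    have T1: "T \<subseteq> Fam m" "phisep m (Vn m T)" "card T + (m - i) = m"
      using T dim_Rn[of m] by (auto simp only: V mem_Collect_eq Pow_iff)
    then have "sepF m T" using sep_iff[of T m] by blast
    moreover have "card T = i" using T1(3) assms by linarith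
    ultimately show "T \<in> SG i m" using T1(1) by (simp add: SG_def)
  qed
qed

lemma D_bound: "(-1) ^ i * D i (Suc m) \<le> int (card (SG i m))"
proof (cases "i \<le> m")
  case True
  have a: "\<bar>D i (Suc m)\<bar> \<le> int (card (SG i m))"
    unfolding D_eq[OF True] using sb_Rn[OF True] ind_SG[OF True] by linarith
  have "(-1) ^ i * D i (Suc m) \<le> \<bar>D i (Suc m)\<bar>"
    by (cases "even i") auto
  then show ?thesis using a by linarith
next
  case False
  then have "D i (Suc m) = 0" using D_zero_small[of m i] by linarith
  then show ?thesis by (simp only: mult_zero_right of_nat_0_le_iff)
qed


definition Psi :: "nat \<Rightarrow> nat \<Rightarrow> nat set list \<Rightarrow> nat set list" where
  "Psi i m xs = map (\<lambda>p. {t\<in>{0..<i}. p \<in> xs ! t}) [1..<m+1]"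

lemma Psi_nth: "p \<in> {1..m} \<Longrightarrow> Psi i m xs ! (p - 1) = {t\<in>{0..<i}. p \<in> xs ! t}"
proof -
  assume p: "p \<in> {1..m}"
  have "[1..<m+1] ! (p - 1) = p" using p by (subst nth_upt) auto
  moreover have "p - 1 < length [1..<m+1]" using p by auto
  ultimately show ?thesis unfolding Psi_def by (simp only: nth_map)
qed

lemma length_Psi[simp]: "length (Psi i m xs) = m"
  by (simp add: Psi_def)

lemma card_perms:
  assumes "finite G"
  shows "card {xs. length xs = card G \<and> distinct xs \<and> set xs \<subseteq> G} = fact (card G)"
proof -
  have "card {xs. length xs = card G \<and> distinct xs \<and> set xs \<subseteq> G} = \<Prod>{card G - card G + 1 .. card G}"
    by (rule card_lists_distinct_length_eq[OF assms]) simp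
  then show ?thesis by (simp add: fact_prod)
qed

lemma SG_count:
  "card (SG i m) * fact i \<le> card {ys. length ys = m \<and> distinct ys \<and> set ys \<subseteq> Pow {0..<i} - {{}}}"
proof -
  define P where "P G = {xs. length xs = card G \<and> distinct xs \<and> set xs \<subseteq> G}" for G :: "nat set set"
  define L where "L = (\<Union>G\<in>SG i m. P G)"
  have fSG: "finite (SG i m)" by (simp add: SG_def)
  have fG: "finite G" if "G \<in> SG i m" for G
    using that finite_subset[of G "Fam m"] by (auto simp: SG_def)
  have setP: "set xs = G" if "G \<in> SG i m" "xs \<in> P G" for G xs
  proof -
    have "set xs \<subseteq> G" "card (set xs) = card G" using that by (auto simp: P_def distinct_card)
    then show ?thesis using card_subset_eq[OF fG[OF that(1)]] by blast
  qed
  have fP: "finite (P G)" if "G \<in> SG i m" for G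
  proof (rule finite_subset)
    show "P G \<subseteq> {xs. set xs \<subseteq> G \<and> length xs = card G}" by (auto simp: P_def)
    show "finite {xs. set xs \<subseteq> G \<and> length xs = card G}"
      by (rule finite_lists_length_eq[OF fG[OF that]])
  qed
  have disj: "P G \<inter> P H = {}" if "G \<in> SG i m" "H \<in> SG i m" "G \<noteq> H" for G H
  proof (rule ccontr)
    assume "P G \<inter> P H \<noteq> {}"
    then obtain xs where "xs \<in> P G" "xs \<in> P H" by blast
    then have "set xs = G" "set xs = H" using setP that(1,2) by blast+
    then show False using that(3) by simp
  qed
  have cP: "card (P G) = fact i" if "G \<in> SG i m" for G
  proof -
    have "card G = i" using that by (simp add: SG_def)
    then show ?thesis using card_perms[OF fG[OF that]] by (simp add: P_def)
  qed
  have "card L = (\<Sum>G\<in>SG i m. card (P G))"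
    unfolding L_def
  proof (rule card_UN_disjoint[OF fSG])
    show "\<forall>G\<in>SG i m. finite (P G)" using fP by blast
    show "\<forall>G\<in>SG i m. \<forall>H\<in>SG i m. G \<noteq> H \<longrightarrow> P G \<inter> P H = {}"
      using disj by blast
  qed
  also have "\<dots> = (\<Sum>G\<in>SG i m. fact i)"
    by (rule sum.cong[OF refl]) (rule cP)
  also have "\<dots> = card (SG i m) * fact i" by simp
  finally have cL: "card L = card (SG i m) * fact i" .
  let ?T = "{ys. length ys = m \<and> distinct ys \<and> set ys \<subseteq> Pow {0..<i} - {{}}}"
  have Lchar: "length xs = i \<and> distinct xs \<and> set xs \<in> SG i m" if "xs \<in> L" for xs
  proof -
    have "xs \<in> (\<Union>G\<in>SG i m. P G)" using that by (simp only: L_def)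
    then obtain G where G: "G \<in> SG i m" "xs \<in> P G" by blast
    have "set xs = G" using setP G by blast
    moreover have "length xs = card G" "distinct xs" using G(2) by (simp_all add: P_def)
    moreover have "card G = i" using G(1) by (simp add: SG_def)
    ultimately show ?thesis using G(1) by simp
  qed
  have sub: "Psi i m ` L \<subseteq> ?T"
  proof
    fix ys assume "ys \<in> Psi i m ` L"
    then obtain xs where xs: "xs \<in> L" "ys = Psi i m xs" by blast
    have l: "length xs = i" "distinct xs" "set xs \<in> SG i m" using Lchar[OF xs(1)] by auto
    then have sep: "sepF m (set xs)" by (simp add: SG_def)
    have ex: "\<exists>t<i. I = xs ! t" if "I \<in> set xs" for I
      using that l(1) by (metis in_set_conv_nth)
    have PN: "Psi i m xs ! k = {t\<in>{0..<i}. Suc k \<in> xs ! t}" if "k < m" for k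
      using Psi_nth[of "Suc k" m i xs] that by simp
    have ne: "Psi i m xs ! k \<noteq> {}" if "k < m" for k
    proof -
      have p: "Suc k \<in> {1..m}" using that by simp
      have "\<exists>I\<in>set xs. Suc k \<in> I" using sep p unfolding sepF_def by blast
      then obtain I where I: "I \<in> set xs" "Suc k \<in> I" by blast
      then obtain t where t: "t < i" "I = xs ! t" using ex by blast
      have "t \<in> Psi i m xs ! k" unfolding PN[OF that] using t I(2) by simp
      then show ?thesis by blast
    qed
    have dist: "distinct (Psi i m xs)"
    proof (subst distinct_conv_nth, intro allI impI)
      fix a b assume ab: "a < length (Psi i m xs)" "b < length (Psi i m xs)" "a \<noteq> b"
      have p: "Suc a \<in> {1..m}" "Suc b \<in> {1..m}" "Suc a \<noteq> Suc b" using ab by auto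
      have "\<exists>I\<in>set xs. (Suc a \<in> I) \<noteq> (Suc b \<in> I)"
        using sep[unfolded sepF_def, THEN conjunct2, rule_format, OF p(1) p(2) p(3)] .
      then obtain I where I: "I \<in> set xs" "(Suc a \<in> I) \<noteq> (Suc b \<in> I)" by blast
      then obtain t where t: "t < i" "I = xs ! t" using ex by blast
      have a: "a < m" "b < m" using ab by auto
      have "t \<in> Psi i m xs ! a \<longleftrightarrow> Suc a \<in> I" unfolding PN[OF a(1)] using t by simp
      moreover have "t \<in> Psi i m xs ! b \<longleftrightarrow> Suc b \<in> I" unfolding PN[OF a(2)] using t by simp
      ultimately show "Psi i m xs ! a \<noteq> Psi i m xs ! b" using I(2) by blast
    qed
    have "set (Psi i m xs) \<subseteq> Pow {0..<i} - {{}}"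
    proof
      fix Y assume "Y \<in> set (Psi i m xs)"
      then obtain k where k: "k < m" "Y = Psi i m xs ! k" by (metis in_set_conv_nth length_Psi)
      have "Y \<subseteq> {0..<i}" unfolding k(2) PN[OF k(1)] by blast
      moreover have "Y \<noteq> {}" using ne[OF k(1)] k(2) by simp
      ultimately show "Y \<in> Pow {0..<i} - {{}}" by blast
    qed
    then show "ys \<in> ?T" using xs(2) dist by simp
  qed
  have inj: "inj_on (Psi i m) L"
  proof (rule inj_onI)
    fix xs ys assume xs: "xs \<in> L" and ys: "ys \<in> L" and eq: "Psi i m xs = Psi i m ys"
    have lx: "length xs = i" "set xs \<in> SG i m" using Lchar[OF xs] by auto
    have ly: "length ys = i" "set ys \<in> SG i m" using Lchar[OF ys] by auto
    have rec: "zs ! t = {p\<in>{1..m}. t \<in> Psi i m zs ! (p - 1)}"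
      if "t < i" "length zs = i" "set zs \<in> SG i m" for zs t
    proof -
      have "zs ! t \<in> Fam m" using that nth_mem[of t zs] by (auto simp: SG_def)
      then have s: "zs ! t \<subseteq> {1..m}" by (simp add: Fam_def)
      show ?thesis
      proof (rule set_eqI)
        fix p
        show "p \<in> zs ! t \<longleftrightarrow> p \<in> {p\<in>{1..m}. t \<in> Psi i m zs ! (p - 1)}"
        proof (cases "p \<in> {1..m}")
          case True
          then show ?thesis using Psi_nth[OF True, of i zs] that(1) by simp
        next
          case False
          then show ?thesis using s by blast
        qed
      qed
    qed
    show "xs = ys"
    proof (rule nth_equalityI)
      show "length xs = length ys" using lx ly by simp
      fix t assume "t < length xs"
      then show "xs ! t = ys ! t" using rec[of t xs] rec[of t ys] lx ly eq by simp
    qed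
  qed
  have fT: "finite ?T"
  proof -
    have "finite (Pow {0..<i} - {{}})" by simp
    then have "finite {xs. set xs \<subseteq> Pow {0..<i} - {{}} \<and> length xs = m}"
      by (rule finite_lists_length_eq)
    then show ?thesis by (rule finite_subset[rotated]) blast
  qed
  have "card L \<le> card ?T"
    using card_inj_on_le[OF inj sub fT] .
  then show ?thesis using cL by simp
qed

lemma card_NZ: "card (Pow {0..<i} - {{}}) = 2 ^ i - 1"
  by (simp add: card_Diff_singleton card_Pow)

lemma SG_empty:
  assumes "2 ^ i - 1 < m"
  shows "SG i m = {}"
proof -
  let ?T = "{ys. length ys = m \<and> distinct ys \<and> set ys \<subseteq> Pow {0..<i} - {{}}}"
  have "?T = {}"
  proof (rule ccontr)
    assume "?T \<noteq> {}"
    then obtain ys where ys: "length ys = m" "distinct ys" "set ys \<subseteq> Pow {0..<i} - {{}}" by auto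
    have "card (set ys) \<le> card (Pow {0..<i} - {{}})" using ys(3) by (intro card_mono) auto
    then show False using ys distinct_card card_NZ assms by fastforce
  qed
  then have c: "card ?T = 0" by (simp only: card.empty)
  have "card (SG i m) * fact i = 0" using SG_count[of i m] unfolding c by simp
  then have "card (SG i m) = 0" by simp
  then show ?thesis by (simp add: SG_def)
qed

lemma SG_bound:
  assumes "m \<le> 2 ^ i - 1"
  shows "real (card (SG i m)) \<le> real ((2 ^ i - 1) choose m) * fact m / fact i"
proof -
  define N where "N = (2::nat) ^ i - 1"
  have "card {ys. length ys = m \<and> distinct ys \<and> set ys \<subseteq> Pow {0..<i} - {{}}} = \<Prod>{N - m + 1 .. N}"
    using card_lists_distinct_length_eq[of "Pow {0..<i} - {{}}" m] assms card_NZ by (simp add: N_def)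
  also have "\<dots> = fact N div fact (N - m)"
    using fact_div_fact[of "N - m" N] assms by (simp add: N_def)
  also have "\<dots> = fact m * (N choose m)"
  proof -
    have "fact m * fact (N - m) * (N choose m) = fact N" using binomial_fact_lemma[of m N] assms by (simp add: N_def)
    then show ?thesis by (metis fact_nonzero nonzero_mult_div_cancel_right mult.commute mult.assoc)
  qed
  finally have "card (SG i m) * fact i \<le> fact m * (N choose m)" using SG_count[of i m] by simp
  then have "real (card (SG i m) * fact i) \<le> real (fact m * (N choose m))" by linarith
  then have "real (card (SG i m)) * fact i \<le> fact m * real (N choose m)" by simp
  then show ?thesis by (simp add: N_def field_simps)
qed


lemma card_Q: "card {S. S \<subseteq> {1..i} \<and> 2 \<le> card S} = 2 ^ i - 1 - i"
proof -
  let ?Q = "{S. S \<subseteq> {1..i} \<and> 2 \<le> card S}"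
  let ?S1 = "(\<lambda>t. {t}) ` {1..i}"
  have P: "Pow {1..i} = ?Q \<union> (insert {} ?S1)"
  proof (rule set_eqI)
    fix S show "S \<in> Pow {1..i} \<longleftrightarrow> S \<in> ?Q \<union> (insert {} ?S1)"
    proof
      assume S: "S \<in> Pow {1..i}"
      then have f: "finite S" by (auto intro: finite_subset)
      show "S \<in> ?Q \<union> (insert {} ?S1)"
      proof (cases "card S")
        case 0 then show ?thesis using f by simp
      next
        case (Suc n)
        show ?thesis
        proof (cases n)
          case 0
          then obtain t where "S = {t}" using Suc card_1_singletonE by auto
          then show ?thesis using S by auto
        next
          case (Suc n') then show ?thesis using S \<open>card S = Suc n\<close> by auto
        qed
      qed
    next
      assume "S \<in> ?Q \<union> (insert {} ?S1)" then show "S \<in> Pow {1..i}" by auto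
    qed
  qed
  have d: "?Q \<inter> insert {} ?S1 = {}" by auto
  have fQ: "finite ?Q" by (rule finite_subset[of _ "Pow {1..i}"]) auto
  have c1: "card (insert {} ?S1) = i + 1"
    by (subst card_insert_disjoint) (auto simp: card_image inj_on_def)
  have "card (Pow {1..i}) = card (?Q \<union> insert {} ?S1)" using P by simp
  also have "\<dots> = card ?Q + card (insert {} ?S1)"
    by (rule card_Un_disjoint[OF fQ _ d]) simp
  finally have "2 ^ i = card ?Q + (i + 1)" using c1 by (simp add: card_Pow)
  then show ?thesis by simp
qed

lemma loopless: "\<forall>e\<in>Fam m. \<not> Rn m \<subseteq> hyp m e"
proof
  fix I assume I: "I \<in> Fam m"
  then obtain p where p: "p \<in> I" by (auto simp: Fam_def)
  then have "p \<in> {1..m}" using I by (auto simp: Fam_def)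
  then show "\<not> Rn m \<subseteq> hyp m I" using ev_hyp[OF I] ev_Rn p by blast
qed

lemma Vn_VV: "Vn m G = arr.VV (hyp m) (Rn m) G"
  by (simp add: VV_Vn Vn_def)

lemma amb_Vn: "finite G \<Longrightarrow> amb m (Vn m G)"
  unfolding Vn_VV by (rule arr.amb_VV) (auto simp: hyp_cuts amb_Rn)

lemma Vn_insert: "Vn m (insert I G) = Vn m G \<inter> hyp m I"
  by (auto simp: Vn_def)

lemma exists_indep:
  assumes "i \<le> m" "m \<le> 2 ^ i - 1"
  shows "\<exists>T. T \<subseteq> Fam m \<and> card T = i \<and> sepF m T \<and> FV.dim (Vn m T) + i = m"
proof -
  let ?Q = "{S. S \<subseteq> {1..i} \<and> 2 \<le> card S}"
  have "card {i+1..m} \<le> card ?Q" using assms card_Q[of i] by simp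
  moreover have "finite ?Q" by (rule finite_subset[of _ "Pow {1..i}"]) auto
  ultimately obtain \<tau> where \<tau>: "\<tau> ` {i+1..m} \<subseteq> ?Q" "inj_on \<tau> {i+1..m}"
    using card_le_inj[of "{i+1..m}" ?Q] by auto
  have tQ: "\<tau> p \<subseteq> {1..i} \<and> 2 \<le> card (\<tau> p)" if "p \<in> {i+1..m}" for p
  proof -
    have "\<tau> p \<in> ?Q" using \<tau>(1) that by blast
    then show ?thesis by simp
  qed
  define col where "col p = (if p \<le> i then {p} else \<tau> p)" for p
  define R where "R t = {p\<in>{1..m}. t \<in> col p}" for t
  have colsub: "col p \<subseteq> {1..i}" if "p \<in> {1..m}" for p
  proof (cases "p \<le> i")
    case True then show ?thesis using that by (simp add: col_def)
  next
    case False
    then have "p \<in> {i+1..m}" using that by auto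
    then have "\<tau> p \<in> ?Q" using \<tau>(1) by blast
    then show ?thesis using False by (simp add: col_def)
  qed
  have colne: "col p \<noteq> {}" if "p \<in> {1..m}" for p
  proof (cases "p \<le> i")
    case False
    then have "2 \<le> card (\<tau> p)" using that tQ[of p] by auto
    then show ?thesis by (auto simp: col_def False)
  qed (simp add: col_def)
  have coldiff: "col p \<noteq> col q" if "p \<in> {1..m}" "q \<in> {1..m}" "p \<noteq> q" for p q
  proof -
    have cq: "2 \<le> card (\<tau> q)" if "q \<in> {i+1..m}" for q using that tQ by blast
    show ?thesis
    proof (cases "p \<le> i"; cases "q \<le> i")
      assume "p \<le> i" "q \<le> i" then show ?thesis using that by (simp add: col_def)
    next
      assume a: "p \<le> i" "\<not> q \<le> i"
      show ?thesis
      proof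
        assume "col p = col q"
        then have "{p} = \<tau> q" using a by (simp add: col_def)
        then have "card (\<tau> q) = 1" by (metis card.empty card_insert_disjoint empty_iff finite.emptyI One_nat_def)
        then show False using cq[of q] a that by simp
      qed
    next
      assume a: "\<not> p \<le> i" "q \<le> i"
      show ?thesis
      proof
        assume "col p = col q"
        then have "{q} = \<tau> p" using a by (simp add: col_def)
        then have "card (\<tau> p) = 1" by (metis card.empty card_insert_disjoint empty_iff finite.emptyI One_nat_def)
        then show False using cq[of p] a that by simp
      qed
    next
      assume "\<not> p \<le> i" "\<not> q \<le> i"
      then show ?thesis using \<tau>(2) that by (auto simp: col_def inj_on_def)
    qed
  qed
  have RtI: "t \<in> R t" if "t \<in> {1..i}" for t using that assms by (auto simp: R_def col_def)
  have RtO: "t' \<notin> R t" if "t \<in> {1..i}" "t' \<in> {1..i}" "t \<noteq> t'" for t t'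
    using that by (auto simp: R_def col_def)
  have RFam: "R t \<in> Fam m" if "t \<in> {1..i}" for t
    using RtI[OF that] by (auto simp: R_def Fam_def)
  define T where "T = R ` {1..i}"
  have injR: "inj_on R {1..i}"
    by (rule inj_onI) (metis RtI RtO)
  have cT: "card T = i" unfolding T_def using card_image[OF injR] by simp
  have TF: "T \<subseteq> Fam m" using RFam by (auto simp: T_def)
  have sep: "sepF m T"
    unfolding sepF_def
  proof (intro conjI ballI impI)
    fix p assume p: "p \<in> {1..m}"
    obtain t where t: "t \<in> col p" using colne[OF p] by blast
    then have "t \<in> {1..i}" using colsub[OF p] by blast
    moreover have "p \<in> R t" using p t by (simp add: R_def)
    ultimately show "\<exists>I\<in>T. p \<in> I" by (auto simp: T_def)
  next
    fix p q assume p: "p \<in> {1..m}" and q: "q \<in> {1..m}" and pq: "p \<noteq> q"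
    have "col p \<noteq> col q" using coldiff[OF p q pq] .
    then obtain t where t: "t \<in> col p \<and> t \<notin> col q \<or> t \<in> col q \<and> t \<notin> col p" by blast
    then have ti: "t \<in> {1..i}" using colsub[OF p] colsub[OF q] by blast
    have e1: "p \<in> R t \<longleftrightarrow> t \<in> col p" using p by (simp add: R_def)
    have e2: "q \<in> R t \<longleftrightarrow> t \<in> col q" using q by (simp add: R_def)
    have ne: "(p \<in> R t) \<noteq> (q \<in> R t)" using t by (elim disjE) (simp_all add: e1 e2)
    have RT: "R t \<in> T" using ti by (simp add: T_def)
    show "\<exists>I\<in>T. (p \<in> I) \<noteq> (q \<in> I)" by (rule bexI[where x="R t" and P="\<lambda>I. (p \<in> I) \<noteq> (q \<in> I)", OF ne RT])
  qed
  have dimJ: "FV.dim (Vn m (R ` J)) + card J = m" if "J \<subseteq> {1..i}" for J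
  proof -
    have "finite J" using that finite_subset by blast
    then show ?thesis using that
    proof (induction J rule: finite_induct)
      case empty
      then show ?case by (simp add: Vn_def dim_Rn)
    next
      case (insert t J)
      let ?U = "Vn m (R ` J)"
      have ti: "t \<in> {1..i}" using insert by auto
      have amb: "amb m ?U" using amb_Vn[of "R ` J" m] insert by simp
      have ct: "cuts m (hyp m (R t))" by (rule hyp_cuts)
      have tm: "t \<in> {1..m}" using ti assms by auto
      have w1: "ev t \<in> ?U"
        unfolding Vn_mem
      proof (intro conjI ballI)
        show "ev t \<in> Rn m" using ev_Rn[OF tm] .
        fix I assume "I \<in> R ` J"
        then obtain t' where t': "t' \<in> J" "I = R t'" by blast
        have "t' \<in> {1..i}" "t' \<noteq> t" using t' insert by auto
        then have "t \<notin> R t'" using RtO ti by blast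
        then show "ev t \<in> hyp m I" using ev_hyp[OF RFam[OF \<open>t' \<in> {1..i}\<close>] tm] t' by simp
      qed
      have w2: "ev t \<notin> hyp m (R t)" using ev_hyp[OF RFam[OF ti] tm] RtI[OF ti] by simp
      have "FV.dim (?U \<inter> hyp m (R t)) + 1 = FV.dim ?U"
        using amb_cut(2)[OF amb ct] w1 w2 by blast
      moreover have "Vn m (R ` insert t J) = ?U \<inter> hyp m (R t)" by (simp add: Vn_insert)
      moreover have "card (insert t J) = card J + 1" using insert by simp
      ultimately show ?case using insert by simp
    qed
  qed
  have "FV.dim (Vn m T) + i = m" using dimJ[of "{1..i}"] by (simp add: T_def)
  then show ?thesis using TF cT sep by blast
qed

lemma D_pos:
  assumes "i + 1 \<le> k" "k \<le> 2 ^ i"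
  shows "0 < (-1) ^ i * D i k"
proof -
  define m where "m = k - 1"
  have k: "k = Suc m" using assms(1) unfolding m_def by linarith
  have im1: "i \<le> m" using assms(1) unfolding m_def by linarith
  have im2: "m \<le> 2 ^ i - 1" using assms(2) unfolding m_def by linarith
  obtain T where T: "T \<subseteq> Fam m" "card T = i" "sepF m T" "FV.dim (Vn m T) + i = m"
    using exists_indep[OF im1 im2] by blast
  have c: "\<forall>e\<in>Fam m. cuts m (hyp m e)" using hyp_cuts by blast
  have V: "arr.VV (hyp m) (Rn m) T = Vn m T" by (simp only: Vn_VV)
  have ph: "phisep m (arr.VV (hyp m) (Rn m) T)" unfolding V using sep_iff[OF T(1)] T(3) by blast
  have cd: "card T + FV.dim (arr.VV (hyp m) (Rn m) T) = FV.dim (Rn m)"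
    unfolding V dim_Rn using T(2,4) by linarith
  have a: "arr.a (phisep m) (hyp m) (Rn m) (Fam m) (FV.dim (arr.VV (hyp m) (Rn m) T)) \<noteq> 0"
    by (rule arr.pos[where n=m and f="hyp m" and W="Rn m" and E="Fam m" and T=T and \<phi>="phisep m",
          OF finite_Fam c amb_Rn loopless T(1) ph cd])
  have d: "FV.dim (arr.VV (hyp m) (Rn m) T) = m - i" unfolding V using T(4) by linarith
  have ne: "D i (Suc m) \<noteq> 0" unfolding D_eq[OF im1] using a unfolding d .
  have s: "0 \<le> (-1) ^ i * D i (Suc m)" by (rule D_sign)
  have "(-1) ^ i * D i (Suc m) \<noteq> 0" using ne by simp
  then have "0 < (-1) ^ i * D i (Suc m)" using s by linarith
  then show ?thesis unfolding k .
qed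


lemma resonance_eq: "resonance n = hyp n ` Fam n"
  by (auto simp: resonance_def Fam_def)

lemma hyp_inj: "inj_on (hyp n) (Fam n)"
proof (rule inj_onI, rule ccontr)
  fix I J assume I: "I \<in> Fam n" and J: "J \<in> Fam n" and eq: "hyp n I = hyp n J" and ne: "I \<noteq> J"
  have "(\<exists>p. p \<in> I \<and> p \<notin> J) \<or> (\<exists>p. p \<in> J \<and> p \<notin> I)" using ne by blast
  then show False
  proof
    assume "\<exists>p. p \<in> I \<and> p \<notin> J"
    then obtain p where p: "p \<in> I" "p \<notin> J" by blast
    then have pn: "p \<in> {1..n}" using I by (auto simp: Fam_def)
    show False using ev_hyp[OF I pn] ev_hyp[OF J pn] p eq by simp
  next
    assume "\<exists>p. p \<in> J \<and> p \<notin> I"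
    then obtain p where p: "p \<in> J" "p \<notin> I" by blast
    then have pn: "p \<in> {1..n}" using J by (auto simp: Fam_def)
    show False using ev_hyp[OF I pn] ev_hyp[OF J pn] p eq by simp
  qed
qed

lemma dim_zero: "FV.dim {0} = 0"
proof -
  have "FV.span {} = FV.span {0}" by (simp add: FV.span_insert_0)
  then show ?thesis using FV.dim_eq_card[of "{}" "{0}"] FV.independent_empty by simp
qed

lemma rk_res: "rk n (resonance n) = n"
proof -
  have "Rn n \<inter> \<Inter>(resonance n) = {0}"
  proof
    show "Rn n \<inter> \<Inter>(resonance n) \<subseteq> {0}"
    proof
      fix x assume x: "x \<in> Rn n \<inter> \<Inter>(resonance n)"
      have "x j = 0" for j
      proof (cases "j \<in> {1..n}")
        case True
        then have "{j} \<in> Fam n" by (auto simp: Fam_def)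
        then have "hyp n {j} \<in> resonance n" by (simp add: resonance_eq)
        then have "x \<in> hyp n {j}" using x by blast
        then show ?thesis by (simp add: hyp_def)
      next
        case False then show ?thesis using x by (auto simp: Rn_def)
      qed
      then show "x \<in> {0}" by (auto simp: zero_fun_def)
    qed
    show "{0} \<subseteq> Rn n \<inter> \<Inter>(resonance n)"
      by (auto simp: Rn_def resonance_def hyp_def zero_fun_def)
  qed
  then show ?thesis by (simp add: rk_def dim_zero)
qed

lemma coeff_neg1_pow: "coeff ((-1) ^ k * p) j = (-1) ^ k * coeff p j" for p :: "int poly"
  by (induction k) (simp_all add: algebra_simps)

definition w :: "nat \<Rightarrow> nat \<Rightarrow> nat set set \<Rightarrow> int" where
  "w n d F = (if FV.dim (Vn n F) = d then (-1) ^ card F else 0)"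

lemma coeff_char:
  "coeff (char_poly n (resonance n)) d = (\<Sum>F\<in>Pow (Fam n). w n d F)"
proof -
  have "coeff (char_poly n (resonance n)) d =
      (\<Sum>S\<in>Pow (resonance n). (-1) ^ card S * (if rk n (resonance n) - rk n S = d then 1 else 0))"
    unfolding char_poly_def coeff_sum coeff_neg1_pow coeff_monom by simp
  also have "\<dots> = (\<Sum>S\<in>Pow (resonance n). if FV.dim (Rn n \<inter> \<Inter>S) = d then (-1) ^ card S else 0)"
  proof (rule sum.cong[OF refl])
    fix S assume S: "S \<in> Pow (resonance n)"
    have "FV.dim (Rn n \<inter> \<Inter>S) \<le> n" by (rule dim_le_n) blast
    then have "rk n (resonance n) - rk n S = FV.dim (Rn n \<inter> \<Inter>S)"
      unfolding rk_res by (simp add: rk_def)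
    then show "(-1) ^ card S * (if rk n (resonance n) - rk n S = d then 1 else 0 :: int) =
        (if FV.dim (Rn n \<inter> \<Inter>S) = d then (-1) ^ card S else 0)" by simp
  qed
  also have "\<dots> = (\<Sum>F\<in>Pow (Fam n). w n d F)"
  proof -
    have P: "Pow (resonance n) = image (hyp n) ` Pow (Fam n)"
      unfolding resonance_eq by (rule image_Pow_surj[symmetric]) simp
    have inj: "inj_on (image (hyp n)) (Pow (Fam n))" by (rule inj_on_image_Pow[OF hyp_inj])
    show ?thesis unfolding P sum.reindex[OF inj] comp_def
    proof (rule sum.cong[OF refl])
      fix F assume F: "F \<in> Pow (Fam n)"
      have "card (hyp n ` F) = card F" using inj_on_subset[OF hyp_inj] F by (simp add: card_image)
      then show "(if FV.dim (Rn n \<inter> \<Inter>(hyp n ` F)) = d then (-1) ^ card (hyp n ` F) else 0 :: int) = w n d F"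
        by (simp add: w_def Vn_def)
    qed
  qed
  finally show ?thesis .
qed


definition FamM :: "nat set \<Rightarrow> nat set set" where
  "FamM M = {S. S \<subseteq> M \<and> S \<noteq> {}}"

definition sepM :: "nat set \<Rightarrow> nat set set \<Rightarrow> bool" where
  "sepM M G \<longleftrightarrow> (\<forall>p\<in>M. \<exists>S\<in>G. p \<in> S) \<and> (\<forall>p\<in>M. \<forall>q\<in>M. p \<noteq> q \<longrightarrow> (\<exists>S\<in>G. (p \<in> S) \<noteq> (q \<in> S)))"

definition VM :: "nat set \<Rightarrow> nat set set \<Rightarrow> (nat \<Rightarrow> real) set" where
  "VM M G = {x. (\<forall>j. j \<notin> M \<longrightarrow> x j = 0) \<and> (\<forall>S\<in>G. (\<Sum>j\<in>S. x j) = 0)}"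

definition DM :: "nat \<Rightarrow> nat set \<Rightarrow> int" where
  "DM i M = (\<Sum>G\<in>Pow (FamM M). if sepM M G \<and> FV.dim (VM M G) + i = card M then (-1) ^ card G else 0)"

lemma Fam_FamM: "Fam m = FamM {1..m}" by (simp add: Fam_def FamM_def)
lemma sepF_sepM: "sepF m = sepM {1..m}" by (simp add: sepF_def sepM_def fun_eq_iff)
lemma Vn_VM: "Vn m G = VM {1..m} G"
  by (auto simp: Vn_def VM_def Rn_def hyp_def)

lemma D_DM: "D i (Suc m) = DM i {1..m}"
  by (simp add: D_def DM_def Fam_FamM sepF_sepM Vn_VM)

lemma VM_Rn: "M \<subseteq> {1..N} \<Longrightarrow> VM M G \<subseteq> Rn N"
  by (auto simp: VM_def Rn_def)

lemma dim_image_le: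
  assumes add: "\<And>x y. L (x + y) = L x + L y" and sc: "\<And>c x. L (fscale c x) = fscale c (L x)"
    and X: "X \<subseteq> Rn N"
  shows "FV.dim (L ` X) \<le> FV.dim X"
proof -
  obtain B where B: "B \<subseteq> X" "FV.independent B" "X \<subseteq> FV.span B" "card B = FV.dim X" "finite B"
    using basis_fin[OF X] .
  have z: "L 0 = 0"
  proof -
    have f0: "fscale 0 (0::nat \<Rightarrow> real) = 0" by (simp add: fscale_def zero_fun_def)
    have "L 0 = fscale 0 (L 0)" using sc[of 0 0] unfolding f0 .
    also have "\<dots> = 0" by (simp add: fscale_def zero_fun_def)
    finally show ?thesis .
  qed
  have sub: "FV.subspace {x. L x \<in> FV.span (L ` B)}"
    unfolding FV.subspace_def using z add sc
    by (auto intro: FV.span_add FV.span_scale FV.span_zero)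
  have "L ` X \<subseteq> FV.span (L ` B)"
  proof
    fix y assume "y \<in> L ` X"
    then obtain x where x: "x \<in> X" "y = L x" by blast
    have "x \<in> FV.span B" using x B(3) by blast
    then have "L x \<in> FV.span (L ` B)"
    proof (rule FV.span_induct[where P="\<lambda>x. L x \<in> FV.span (L ` B)"])
      show "FV.subspace {x. L x \<in> FV.span (L ` B)}" by (rule sub)
      fix b assume "b \<in> B" then show "L b \<in> FV.span (L ` B)" by (intro FV.span_base) blast
    qed
    then show "y \<in> FV.span (L ` B)" using x by simp
  qed
  then have "FV.dim (L ` X) \<le> card (L ` B)" using FV.dim_le_card B(5) by blast
  also have "\<dots> \<le> card B" using B(5) by (rule card_image_le)
  finally show ?thesis using B(4) by simp
qed

lemma relabel_le:
  assumes bij: "bij_betw \<sigma> A B" and A: "A \<subseteq> {1..N}" and B: "B \<subseteq> {1..N}" and G: "G \<subseteq> Pow A"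
  shows "FV.dim (VM B (image \<sigma> ` G)) \<le> FV.dim (VM A G)"
proof -
  define \<tau> where "\<tau> = inv_into A \<sigma>"
  define L where "L x = (\<lambda>j. if j \<in> B then x (\<tau> j) else 0)" for x :: "nat \<Rightarrow> real"
  have add: "L (x + y) = L x + L y" for x y by (auto simp: L_def fun_eq_iff)
  have sc: "L (fscale c x) = fscale c (L x)" for c x by (auto simp: L_def fun_eq_iff fscale_def)
  have inj: "inj_on \<sigma> A" using bij by (simp add: bij_betw_def)
  have img: "\<sigma> ` A = B" using bij by (simp add: bij_betw_def)
  have sub: "VM B (image \<sigma> ` G) \<subseteq> L ` VM A G"
  proof
    fix y assume y: "y \<in> VM B (image \<sigma> ` G)"
    define x where "x p = (if p \<in> A then y (\<sigma> p) else 0)" for p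
    have "x \<in> VM A G"
      unfolding VM_def
    proof (intro CollectI conjI allI impI ballI)
      fix j assume "j \<notin> A" then show "x j = 0" by (simp add: x_def)
    next
      fix S assume S: "S \<in> G"
      then have SA: "S \<subseteq> A" using G by blast
      have "(\<Sum>j\<in>S. x j) = (\<Sum>j\<in>S. y (\<sigma> j))" using SA by (intro sum.cong) (auto simp: x_def)
      also have "\<dots> = (\<Sum>j\<in>\<sigma> ` S. y j)"
        using inj_on_subset[OF inj SA] by (simp add: sum.reindex)
      also have "\<dots> = 0" using y S by (auto simp: VM_def)
      finally show "(\<Sum>j\<in>S. x j) = 0" .
    qed
    moreover have "L x = y"
    proof
      fix j show "L x j = y j"
      proof (cases "j \<in> B")
        case True
        then have "\<tau> j \<in> A" "\<sigma> (\<tau> j) = j" using img by (auto simp: \<tau>_def inv_into_into f_inv_into_f)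
        then show ?thesis using True by (simp add: L_def x_def)
      next
        case False then show ?thesis using y by (simp add: L_def VM_def)
      qed
    qed
    ultimately show "y \<in> L ` VM A G" by blast
  qed
  have "FV.dim (VM B (image \<sigma> ` G)) \<le> FV.dim (L ` VM A G)"
  proof (rule dim_mono_Rn[OF sub])
    show "L ` VM A G \<subseteq> Rn N" using B by (auto simp: L_def Rn_def)
  qed
  also have "\<dots> \<le> FV.dim (VM A G)" by (rule dim_image_le[OF add sc VM_Rn[OF A]])
  finally show ?thesis .
qed

lemma relabel_eq:
  assumes bij: "bij_betw \<sigma> A B" and A: "A \<subseteq> {1..N}" and B: "B \<subseteq> {1..N}" and G: "G \<subseteq> Pow A"
  shows "FV.dim (VM B (image \<sigma> ` G)) = FV.dim (VM A G)"
proof -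
  define \<tau> where "\<tau> = inv_into A \<sigma>"
  have bij': "bij_betw \<tau> B A" using bij by (simp add: \<tau>_def bij_betw_inv_into)
  have G': "image \<sigma> ` G \<subseteq> Pow B" using G bij by (auto simp: bij_betw_def)
  have bk: "image \<tau> ` (image \<sigma> ` G) = G"
  proof -
    have "image \<tau> (image \<sigma> S) = S" if "S \<in> G" for S
    proof -
      have "S \<subseteq> A" using that G by blast
      then show ?thesis using bij by (auto simp: \<tau>_def bij_betw_def inv_into_f_f)
    qed
    then show ?thesis by (simp add: image_image)
  qed
  have "FV.dim (VM A G) \<le> FV.dim (VM B (image \<sigma> ` G))"
    using relabel_le[OF bij' B A G'] bk by simp
  then show ?thesis using relabel_le[OF bij A B G] by simp
qed

lemma sepM_relabel:
  assumes bij: "bij_betw \<sigma> A B" and G: "G \<subseteq> Pow A"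
  shows "sepM B (image \<sigma> ` G) \<longleftrightarrow> sepM A G"
proof -
  have inj: "inj_on \<sigma> A" and img: "\<sigma> ` A = B" using bij by (auto simp: bij_betw_def)
  have mem: "\<sigma> p \<in> \<sigma> ` S \<longleftrightarrow> p \<in> S" if "p \<in> A" "S \<in> G" for p S
    using that G inj by (auto simp: inj_on_def)
  have A1: "(\<forall>p\<in>A. \<exists>S\<in>G. p \<in> S) \<longleftrightarrow> (\<forall>p'\<in>B. \<exists>S'\<in>image \<sigma> ` G. p' \<in> S')"
  proof
    assume h: "\<forall>p\<in>A. \<exists>S\<in>G. p \<in> S"
    show "\<forall>p'\<in>B. \<exists>S'\<in>image \<sigma> ` G. p' \<in> S'"
    proof
      fix p' assume "p' \<in> B"
      then obtain p where p: "p \<in> A" "p' = \<sigma> p" using img by blast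
      then obtain S where S: "S \<in> G" "p \<in> S" using h by blast
      then show "\<exists>S'\<in>image \<sigma> ` G. p' \<in> S'" using p by blast
    qed
  next
    assume h: "\<forall>p'\<in>B. \<exists>S'\<in>image \<sigma> ` G. p' \<in> S'"
    show "\<forall>p\<in>A. \<exists>S\<in>G. p \<in> S"
    proof
      fix p assume p: "p \<in> A"
      then have "\<sigma> p \<in> B" using img by blast
      then obtain S where S: "S \<in> G" "\<sigma> p \<in> \<sigma> ` S" using h by blast
      then show "\<exists>S\<in>G. p \<in> S" using mem[OF p S(1)] by blast
    qed
  qed
  have A2: "(\<forall>p\<in>A. \<forall>q\<in>A. p \<noteq> q \<longrightarrow> (\<exists>S\<in>G. (p \<in> S) \<noteq> (q \<in> S))) \<longleftrightarrow>
      (\<forall>p'\<in>B. \<forall>q'\<in>B. p' \<noteq> q' \<longrightarrow> (\<exists>S'\<in>image \<sigma> ` G. (p' \<in> S') \<noteq> (q' \<in> S')))"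
  proof
    assume h: "\<forall>p\<in>A. \<forall>q\<in>A. p \<noteq> q \<longrightarrow> (\<exists>S\<in>G. (p \<in> S) \<noteq> (q \<in> S))"
    show "\<forall>p'\<in>B. \<forall>q'\<in>B. p' \<noteq> q' \<longrightarrow> (\<exists>S'\<in>image \<sigma> ` G. (p' \<in> S') \<noteq> (q' \<in> S'))"
    proof (intro ballI impI)
      fix p' q' assume p': "p' \<in> B" and q': "q' \<in> B" and ne: "p' \<noteq> q'"
      obtain p where p: "p \<in> A" "p' = \<sigma> p" using img p' by blast
      obtain q where q: "q \<in> A" "q' = \<sigma> q" using img q' by blast
      have "p \<noteq> q" using ne p q by blast
      then have "\<exists>S\<in>G. (p \<in> S) \<noteq> (q \<in> S)" using h[rule_format, OF p(1) q(1)] by blast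
      then obtain S where S: "S \<in> G" "(p \<in> S) \<noteq> (q \<in> S)" by (elim bexE)
      have "(p' \<in> \<sigma> ` S) \<noteq> (q' \<in> \<sigma> ` S)" using S(2) mem[OF p(1) S(1)] mem[OF q(1) S(1)] p q by simp
      moreover have "\<sigma> ` S \<in> image \<sigma> ` G" using S(1) by blast
      ultimately show "\<exists>S'\<in>image \<sigma> ` G. (p' \<in> S') \<noteq> (q' \<in> S')"
        by (rule bexI[where P="\<lambda>S'. (p' \<in> S') \<noteq> (q' \<in> S')"])
    qed
  next
    assume h: "\<forall>p'\<in>B. \<forall>q'\<in>B. p' \<noteq> q' \<longrightarrow> (\<exists>S'\<in>image \<sigma> ` G. (p' \<in> S') \<noteq> (q' \<in> S'))"
    show "\<forall>p\<in>A. \<forall>q\<in>A. p \<noteq> q \<longrightarrow> (\<exists>S\<in>G. (p \<in> S) \<noteq> (q \<in> S))"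
    proof (intro ballI impI)
      fix p q assume p: "p \<in> A" and q: "q \<in> A" and ne: "p \<noteq> q"
      have "\<sigma> p \<noteq> \<sigma> q" using inj p q ne by (auto simp: inj_on_def)
      moreover have "\<sigma> p \<in> B" "\<sigma> q \<in> B" using img p q by auto
      ultimately have "\<exists>S'\<in>image \<sigma> ` G. (\<sigma> p \<in> S') \<noteq> (\<sigma> q \<in> S')"
        using h[rule_format, of "\<sigma> p" "\<sigma> q"] by blast
      then obtain S' where S': "S' \<in> image \<sigma> ` G" "(\<sigma> p \<in> S') \<noteq> (\<sigma> q \<in> S')" by (elim bexE)
      then obtain S where S: "S \<in> G" "S' = \<sigma> ` S" by blast
      have "(p \<in> S) \<noteq> (q \<in> S)" using S'(2) mem[OF p S(1)] mem[OF q S(1)] S(2) by simp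
      then show "\<exists>S\<in>G. (p \<in> S) \<noteq> (q \<in> S)" by (rule bexI[where P="\<lambda>S. (p \<in> S) \<noteq> (q \<in> S)", OF _ S(1)])
    qed
  qed
  show ?thesis unfolding sepM_def A1 A2 ..
qed

lemma DM_relabel:
  assumes bij: "bij_betw \<sigma> A B" and A: "A \<subseteq> {1..N}" and B: "B \<subseteq> {1..N}"
  shows "DM i B = DM i A"
proof -
  have inj: "inj_on \<sigma> A" and img: "\<sigma> ` A = B" using bij by (auto simp: bij_betw_def)
  have fA: "finite A" using A finite_subset by blast
  have cAB: "card B = card A" using bij by (simp add: bij_betw_same_card)
  have bF: "bij_betw (image \<sigma>) (FamM A) (FamM B)"
  proof (rule bij_betw_imageI)
    show "inj_on (image \<sigma>) (FamM A)"
      using inj_on_image_Pow[OF inj] by (rule inj_on_subset) (auto simp: FamM_def)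
    show "image \<sigma> ` FamM A = FamM B"
    proof
      show "image \<sigma> ` FamM A \<subseteq> FamM B" using img by (auto simp: FamM_def)
      show "FamM B \<subseteq> image \<sigma> ` FamM A"
      proof
        fix S' assume S': "S' \<in> FamM B"
        define S where "S = inv_into A \<sigma> ` S'"
        have "S \<subseteq> A" using S' img by (auto simp: S_def FamM_def inv_into_into)
        moreover have "\<sigma> ` S = S'" using S' img by (auto simp: S_def FamM_def f_inv_into_f image_image)
          (metis f_inv_into_f image_eqI subsetD)
        ultimately show "S' \<in> image \<sigma> ` FamM A" using S' by (auto simp: FamM_def)
      qed
    qed
  qed
  have bP: "bij_betw (image (image \<sigma>)) (Pow (FamM A)) (Pow (FamM B))"
    by (rule bij_betw_image_Pow[OF bF])
  have "DM i B = (\<Sum>G\<in>Pow (FamM A). (\<lambda>G'. if sepM B G' \<and> FV.dim (VM B G') + i = card B then (-1) ^ card G' else 0) (image \<sigma> ` G))"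
    unfolding DM_def using sum.reindex_bij_betw[OF bP, symmetric] by simp
  also have "\<dots> = DM i A"
    unfolding DM_def
  proof (rule sum.cong[OF refl])
    fix G assume G: "G \<in> Pow (FamM A)"
    have GA: "G \<subseteq> Pow A" using G by (auto simp: FamM_def)
    have "card (image \<sigma> ` G) = card G"
      using inj_on_subset[OF inj_on_image_Pow[OF inj] GA] by (simp add: card_image)
    then show "(\<lambda>G'. if sepM B G' \<and> FV.dim (VM B G') + i = card B then (-1) ^ card G' else 0) (image \<sigma> ` G) =
        (if sepM A G \<and> FV.dim (VM A G) + i = card A then (-1) ^ card G else (0::int))"
      using sepM_relabel[OF bij GA] relabel_eq[OF bij A B GA] cAB by simp
  qed
  finally show ?thesis .
qed

lemma DM_D:
  assumes "M \<subseteq> {1..N}"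
  shows "DM i M = D i (Suc (card M))"
proof -
  have "finite M" using assms finite_subset by blast
  then obtain h where h: "bij_betw h {1..card M} M" using ex_bij_betw_nat_finite_1 by blast
  have "card M \<le> N" using card_mono[OF _ assms] by simp
  then have "{1..card M} \<subseteq> {1..N}" by auto
  then have "DM i M = DM i {1..card M}" by (rule DM_relabel[OF h _ assms])
  then show ?thesis by (simp add: D_DM)
qed


definition RG :: "nat \<Rightarrow> (nat \<Rightarrow> nat) set" where
  "RG n = {g. (\<forall>j. j \<notin> {1..n} \<longrightarrow> g j = 0) \<and> (\<forall>j\<in>{1..n}. g j = 0 \<or> (g j \<le> j \<and> g (g j) = g j))}"

definition Mg :: "nat \<Rightarrow> (nat \<Rightarrow> nat) \<Rightarrow> nat set" where
  "Mg n g = {j\<in>{1..n}. g j = j}"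

definition pb :: "nat \<Rightarrow> (nat \<Rightarrow> nat) \<Rightarrow> nat set \<Rightarrow> nat set" where
  "pb n g S = {j\<in>{1..n}. g j \<in> S}"

definition SS :: "nat \<Rightarrow> (nat \<Rightarrow> nat) \<Rightarrow> nat set set set" where
  "SS n g = {G\<in>Pow (FamM (Mg n g)). sepM (Mg n g) G}"

definition col :: "nat set set \<Rightarrow> nat \<Rightarrow> nat set set" where
  "col F j = {I\<in>F. j \<in> I}"

definition gF :: "nat \<Rightarrow> nat set set \<Rightarrow> nat \<Rightarrow> nat" where
  "gF n F j = (if j \<in> {1..n} \<and> col F j \<noteq> {} then (LEAST m. col F m = col F j) else 0)"

definition GF :: "nat \<Rightarrow> nat set set \<Rightarrow> nat set set" where
  "GF n F = (\<lambda>I. I \<inter> Mg n (gF n F)) ` F"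

lemma RG_out: "g \<in> RG n \<Longrightarrow> j \<notin> {1..n} \<Longrightarrow> g j = 0"
  by (simp add: RG_def)

lemma RG_in: "g \<in> RG n \<Longrightarrow> j \<in> {1..n} \<Longrightarrow> g j \<noteq> 0 \<Longrightarrow> g j \<in> Mg n g \<and> g j \<le> j"
proof -
  assume g: "g \<in> RG n" and j: "j \<in> {1..n}" and ne: "g j \<noteq> 0"
  have "\<forall>j\<in>{1..n}. g j = 0 \<or> (g j \<le> j \<and> g (g j) = g j)" using g unfolding RG_def by blast
  then have "g j = 0 \<or> (g j \<le> j \<and> g (g j) = g j)" using j by blast
  then have "g j \<le> j \<and> g (g j) = g j" using ne by simp
  moreover have "j \<le> n" using j by simp
  ultimately show ?thesis using ne by (simp add: Mg_def)
qed

lemma Mg_sub: "Mg n g \<subseteq> {1..n}" by (auto simp: Mg_def)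

lemma pb_M: "S \<subseteq> Mg n g \<Longrightarrow> pb n g S \<inter> Mg n g = S"
  by (auto simp: pb_def Mg_def)

section \<open>From (g,G) to F\<close>

context
  fixes n g G
  assumes g: "g \<in> RG n" and G: "G \<in> SS n g"
begin


lemma GsubM: "S \<in> G \<Longrightarrow> S \<subseteq> (Mg n g) \<and> S \<noteq> {}"
  using G by (auto simp: SS_def FamM_def)

lemma sepG: "sepM (Mg n g) G" using G by (simp add: SS_def)

lemma pb_inj: "inj_on (pb n g) G"
  by (rule inj_onI) (metis pb_M GsubM)

lemma F_Fam: "(pb n g ` G) \<in> Pow (Fam n)"
proof -
  have "pb n g S \<in> Fam n" if S: "S \<in> G" for S
  proof -
    obtain m where m: "m \<in> S" using GsubM[OF S] by blast
    then have "m \<in> (Mg n g)" using GsubM[OF S] by blast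
    then have "m \<in> pb n g S" using m by (auto simp: Mg_def pb_def)
    then show ?thesis by (auto simp: Fam_def pb_def)
  qed
  then show ?thesis by blast
qed

lemma mem_pb: "j \<in> pb n g S \<longleftrightarrow> j \<in> {1..n} \<and> g j \<in> S"
  by (simp add: pb_def)

lemma colF: "j \<in> {1..n} \<Longrightarrow> col (pb n g ` G) j = pb n g ` {S\<in>G. g j \<in> S}"
  by (auto simp: col_def mem_pb)

lemma colF_out: "j \<notin> {1..n} \<Longrightarrow> col (pb n g ` G) j = {}"
  by (auto simp: col_def mem_pb)

lemma col_eq_iff:
  assumes j: "j \<in> {1..n}" and j': "j' \<in> {1..n}"
  shows "col (pb n g ` G) j = col (pb n g ` G) j' \<longleftrightarrow> g j = g j'"
proof
  assume "g j = g j'" then show "col (pb n g ` G) j = col (pb n g ` G) j'" using colF[OF j] colF[OF j'] by simp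
next
  assume eq: "col (pb n g ` G) j = col (pb n g ` G) j'"
  show "g j = g j'"
  proof (rule ccontr)
    assume ne: "g j \<noteq> g j'"
    have memc: "pb n g S \<in> col (pb n g ` G) k \<longleftrightarrow> g k \<in> S" if "S \<in> G" "k \<in> {1..n}" for S k
    proof -
      have "pb n g S \<in> col (pb n g ` G) k \<longleftrightarrow> (\<exists>S'\<in>G. g k \<in> S' \<and> pb n g S = pb n g S')"
        using colF[OF that(2)] by auto
      also have "\<dots> \<longleftrightarrow> g k \<in> S" using pb_inj that(1) by (auto simp: inj_on_def)
      finally show ?thesis .
    qed
    show False
    proof (cases "g j = 0")
      case True
      then have "g j' \<noteq> 0" using ne by simp
      then have "g j' \<in> (Mg n g)" using RG_in[OF g j'] by blast
      then obtain S where S: "S \<in> G" "g j' \<in> S" using sepG unfolding sepM_def by blast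
      have "g j \<notin> S" using True GsubM[OF S(1)] Mg_sub by force
      then show False using memc[OF S(1) j] memc[OF S(1) j'] S(2) eq by blast
    next
      case False
      then have gjM: "g j \<in> (Mg n g)" using RG_in[OF g j] by blast
      show False
      proof (cases "g j' = 0")
        case True
        obtain S where S: "S \<in> G" "g j \<in> S" using sepG gjM unfolding sepM_def by blast
        have "g j' \<notin> S" using True GsubM[OF S(1)] Mg_sub by force
        then show False using memc[OF S(1) j] memc[OF S(1) j'] S(2) eq by blast
      next
        case False
        then have gj'M: "g j' \<in> (Mg n g)" using RG_in[OF g j'] by blast
        have "\<exists>S\<in>G. (g j \<in> S) \<noteq> (g j' \<in> S)"
          using sepG[unfolded sepM_def, THEN conjunct2, rule_format, OF gjM gj'M ne] .
        then obtain S where S: "S \<in> G" "(g j \<in> S) \<noteq> (g j' \<in> S)" by (elim bexE)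
        have "(pb n g S \<in> col (pb n g ` G) j) \<noteq> (pb n g S \<in> col (pb n g ` G) j')"
          using S(2) memc[OF S(1) j] memc[OF S(1) j'] by simp
        then show False using eq by simp
      qed
    qed
  qed
qed

lemma col_empty_iff:
  assumes j: "j \<in> {1..n}"
  shows "col (pb n g ` G) j = {} \<longleftrightarrow> g j = 0"
proof
  assume "g j = 0"
  then show "col (pb n g ` G) j = {}" using colF[OF j] GsubM Mg_sub by fastforce
next
  assume e: "col (pb n g ` G) j = {}"
  show "g j = 0"
  proof (rule ccontr)
    assume "g j \<noteq> 0"
    then have "g j \<in> (Mg n g)" using RG_in[OF g j] by blast
    then obtain S where "S \<in> G" "g j \<in> S" using sepG unfolding sepM_def by blast
    then show False using e colF[OF j] by blast
  qed
qed

lemma gF_eq: "gF n (pb n g ` G) = g"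
proof
  fix j
  show "gF n (pb n g ` G) j = g j"
  proof (cases "j \<in> {1..n}")
    case False
    then show ?thesis using RG_out[OF g False] False by (auto simp: gF_def)
  next
    case j: True
    show ?thesis
    proof (cases "g j = 0")
      case True
      then show ?thesis using col_empty_iff[OF j] by (simp add: gF_def)
    next
      case False
      have ne: "col (pb n g ` G) j \<noteq> {}" using col_empty_iff[OF j] False by simp
      have gj: "g j \<in> (Mg n g)" "g j \<le> j" using RG_in[OF g j False] by auto
      then have gjn: "g j \<in> {1..n}" using Mg_sub by blast
      have ggj: "g (g j) = g j" using gj(1) by (simp add: Mg_def)
      have "(LEAST m. col (pb n g ` G) m = col (pb n g ` G) j) = g j"
      proof (rule Least_equality)
        show "col (pb n g ` G) (g j) = col (pb n g ` G) j" using col_eq_iff[OF gjn j] ggj by simp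
      next
        fix m assume m: "col (pb n g ` G) m = col (pb n g ` G) j"
        show "g j \<le> m"
        proof (rule ccontr)
          assume lt: "\<not> g j \<le> m"
          have mn: "m \<in> {1..n}" using m ne colF_out by (cases "m \<in> {1..n}") auto
          have "g m = g j" using col_eq_iff[OF mn j] m by simp
          moreover have "g m \<le> m" using RG_in[OF g mn] False calculation by auto
          ultimately show False using lt by simp
        qed
      qed
      then show ?thesis using j ne by (simp add: gF_def)
    qed
  qed
qed

lemma GF_eq: "GF n (pb n g ` G) = G"
proof -
  have "GF n (pb n g ` G) = (\<lambda>I. I \<inter> (Mg n g)) ` (pb n g ` G)" by (simp add: GF_def gF_eq)
  also have "\<dots> = (\<lambda>S. pb n g S \<inter> (Mg n g)) ` G" by (simp add: image_image)
  also have "\<dots> = G" using pb_M GsubM by (auto simp: image_iff)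
  finally show ?thesis .
qed

lemma card_F: "card (pb n g ` G) = card G"
  by (rule card_image[OF pb_inj])

end

section \<open>From F to (g,G)\<close>

context
  fixes n F
  assumes F: "F \<in> Pow (Fam n)"
begin


lemma colF0: "j \<notin> {1..n} \<Longrightarrow> col F j = {}"
  using F by (force simp: col_def Fam_def)

lemma gF_prop:
  assumes j: "j \<in> {1..n}" and ne: "col F j \<noteq> {}"
  shows "col F ((gF n F) j) = col F j" "(gF n F) j \<le> j" "(gF n F) j \<in> {1..n}"
proof -
  have gdef: "(gF n F) j = (LEAST m. col F m = col F j)" using j ne by (simp add: gF_def)
  show c: "col F ((gF n F) j) = col F j" unfolding gdef by (rule LeastI[of _ j]) simp
  show l: "(gF n F) j \<le> j" unfolding gdef by (rule Least_le) simp
  have "(gF n F) j \<in> {1..n}"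
  proof (rule ccontr)
    assume "(gF n F) j \<notin> {1..n}"
    then have "col F ((gF n F) j) = {}" by (rule colF0)
    then show False using c ne by simp
  qed
  then show "(gF n F) j \<in> {1..n}" .
qed

lemma gF_eq_iff:
  assumes j: "j \<in> {1..n}" and j': "j' \<in> {1..n}" and ne: "col F j \<noteq> {}"
  shows "(gF n F) j = (gF n F) j' \<longleftrightarrow> col F j = col F j'"
proof
  assume eq: "(gF n F) j = (gF n F) j'"
  have "(gF n F) j \<noteq> 0" using gF_prop(3)[OF j ne] by simp
  then have ne': "col F j' \<noteq> {}" using eq j' by (auto simp: gF_def split: if_splits)
  show "col F j = col F j'" using gF_prop(1)[OF j ne] gF_prop(1)[OF j' ne'] eq by simp
next
  assume "col F j = col F j'"
  then show "(gF n F) j = (gF n F) j'" using j j' by (simp add: gF_def)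
qed

lemma gF_RG: "(gF n F) \<in> RG n"
  unfolding RG_def
proof (intro CollectI conjI allI impI ballI)
  fix j assume "j \<notin> {1..n}" then show "(gF n F) j = 0" by (auto simp: gF_def)
next
  fix j assume j: "j \<in> {1..n}"
  show "(gF n F) j = 0 \<or> ((gF n F) j \<le> j \<and> (gF n F) ((gF n F) j) = (gF n F) j)"
  proof (cases "col F j = {}")
    case True then show ?thesis by (simp add: gF_def)
  next
    case False
    have "(gF n F) ((gF n F) j) = (gF n F) j"
      using gF_eq_iff[OF gF_prop(3)[OF j False] j] gF_prop(1)[OF j False] False by simp
    then show ?thesis using gF_prop(2)[OF j False] by simp
  qed
qed

lemma in_I_iff:
  assumes I: "I \<in> F" and j: "j \<in> {1..n}"
  shows "j \<in> I \<longleftrightarrow> (gF n F) j \<in> I \<inter> Mg n (gF n F)"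
proof
  assume jI: "j \<in> I"
  then have ne: "col F j \<noteq> {}" using I by (auto simp: col_def)
  have "I \<in> col F ((gF n F) j)" using gF_prop(1)[OF j ne] I jI by (simp add: col_def)
  then have "(gF n F) j \<in> I" by (simp add: col_def)
  moreover have "(gF n F) j \<in> Mg n (gF n F)"
    using gF_prop[OF j ne] gF_eq_iff[OF gF_prop(3)[OF j ne] j] ne by (simp add: Mg_def)
  ultimately show "(gF n F) j \<in> I \<inter> Mg n (gF n F)" by blast
next
  assume h: "(gF n F) j \<in> I \<inter> Mg n (gF n F)"
  then have "(gF n F) j \<noteq> 0" using Mg_sub by force
  then have ne: "col F j \<noteq> {}" by (auto simp: gF_def split: if_splits)
  have "I \<in> col F ((gF n F) j)" using h I by (simp add: col_def)
  then have "I \<in> col F j" using gF_prop(1)[OF j ne] by simp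
  then show "j \<in> I" by (simp add: col_def)
qed

lemma pb_GF: "pb n (gF n F) (I \<inter> Mg n (gF n F)) = I" if I: "I \<in> F" for I
proof -
  have "I \<subseteq> {1..n}" using F I by (auto simp: Fam_def)
  then show ?thesis using in_I_iff[OF I] by (auto simp: pb_def)
qed

lemma GF_SS: "GF n F \<in> SS n (gF n F)"
proof -
  let ?M = "Mg n (gF n F)"
  have 1: "GF n F \<subseteq> FamM ?M"
  proof
    fix S assume "S \<in> GF n F"
    then obtain I where I: "I \<in> F" "S = I \<inter> ?M" by (auto simp: GF_def)
    obtain j where j: "j \<in> I" using F I by (auto simp: Fam_def)
    have "I \<in> Fam n" using F I(1) by blast
    then have "I \<subseteq> {1..n}" by (simp add: Fam_def)
    then have jn: "j \<in> {1..n}" using j by blast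
    have "(gF n F) j \<in> S" using in_I_iff[OF I(1) jn] j I(2) by simp
    then show "S \<in> FamM ?M" using I by (auto simp: FamM_def)
  qed
  have 2: "sepM ?M (GF n F)"
    unfolding sepM_def
  proof (intro conjI ballI impI)
    fix p assume p: "p \<in> ?M"
    then have pn: "p \<in> {1..n}" and gp: "(gF n F) p = p" by (auto simp: Mg_def)
    have "(gF n F) p \<noteq> 0" using gp pn by simp
    then have "col F p \<noteq> {}" by (auto simp: gF_def split: if_splits)
    then obtain I where I: "I \<in> F" "p \<in> I" by (auto simp: col_def)
    then have "p \<in> I \<inter> ?M" using p by blast
    moreover have "I \<inter> ?M \<in> GF n F" using I by (auto simp: GF_def)
    ultimately show "\<exists>S\<in>GF n F. p \<in> S" by blast
  next
    fix p q assume p: "p \<in> ?M" and q: "q \<in> ?M" and pq: "p \<noteq> q"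
    have pn: "p \<in> {1..n}" and gp: "(gF n F) p = p" using p by (auto simp: Mg_def)
    have qn: "q \<in> {1..n}" and gq: "(gF n F) q = q" using q by (auto simp: Mg_def)
    have "(gF n F) p \<noteq> 0" using gp pn by simp
    then have ne: "col F p \<noteq> {}" by (auto simp: gF_def split: if_splits)
    have "col F p \<noteq> col F q" using gF_eq_iff[OF pn qn ne] gp gq pq by simp
    then obtain I where I: "I \<in> F" "(p \<in> I) \<noteq> (q \<in> I)" unfolding col_def by blast
    have "(p \<in> I \<inter> ?M) \<noteq> (q \<in> I \<inter> ?M)" using I(2) p q by simp
    moreover have "I \<inter> ?M \<in> GF n F" using I by (auto simp: GF_def)
    ultimately show "\<exists>S\<in>GF n F. (p \<in> S) \<noteq> (q \<in> S)"
      by (rule bexI[where P="\<lambda>S. (p \<in> S) \<noteq> (q \<in> S)"])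
  qed
  show ?thesis using 1 2 by (simp add: SS_def)
qed

lemma pb_GF_eq: "pb n (gF n F) ` GF n F = F"
proof -
  have "pb n (gF n F) ` GF n F = (\<lambda>I. pb n (gF n F) (I \<inter> Mg n (gF n F))) ` F" by (simp add: GF_def image_image)
  also have "\<dots> = F" using pb_GF by simp
  finally show ?thesis .
qed

end

lemma bij_decomp:
  "bij_betw (\<lambda>(g, G). pb n g ` G) (Sigma (RG n) (SS n)) (Pow (Fam n))"
proof (rule bij_betw_byWitness[where f'="\<lambda>F. (gF n F, GF n F)"])
  show "\<forall>a\<in>Sigma (RG n) (SS n). (\<lambda>F. (gF n F, GF n F)) ((\<lambda>(g, G). pb n g ` G) a) = a"
  proof
    fix a assume "a \<in> Sigma (RG n) (SS n)"
    then obtain g G where a: "a = (g, G)" "g \<in> RG n" "G \<in> SS n g" by blast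
    then show "(\<lambda>F. (gF n F, GF n F)) ((\<lambda>(g, G). pb n g ` G) a) = a"
      using gF_eq[OF a(2,3)] GF_eq[OF a(2,3)] by simp
  qed
  show "\<forall>a'\<in>Pow (Fam n). (\<lambda>(g, G). pb n g ` G) ((\<lambda>F. (gF n F, GF n F)) a') = a'"
    using pb_GF_eq by simp
  show "(\<lambda>(g, G). pb n g ` G) ` Sigma (RG n) (SS n) \<subseteq> Pow (Fam n)"
  proof (rule image_subsetI)
    fix a assume "a \<in> Sigma (RG n) (SS n)"
    then obtain g G where a: "a = (g, G)" "g \<in> RG n" "G \<in> SS n g" by blast
    then show "(\<lambda>(g, G). pb n g ` G) a \<in> Pow (Fam n)" using F_Fam[OF a(2,3)] by simp
  qed
  show "(\<lambda>F. (gF n F, GF n F)) ` Pow (Fam n) \<subseteq> Sigma (RG n) (SS n)"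
  proof (rule image_subsetI)
    fix F assume F: "F \<in> Pow (Fam n)"
    show "(gF n F, GF n F) \<in> Sigma (RG n) (SS n)" using gF_RG[OF F] GF_SS[OF F] by blast
  qed
qed


definition Vs :: "nat \<Rightarrow> (nat \<Rightarrow> nat) \<Rightarrow> nat set" where
  "Vs n g = insert (Suc n) (insert 0 (Mg n g))"

lemma RG_0: "RG 0 = {\<lambda>_. 0}"
  by (auto simp: RG_def)

lemma ext_RG:
  assumes g: "g \<in> RG n" and v: "v \<in> Vs n g"
  shows "g(Suc n := v) \<in> RG (Suc n)"
  unfolding RG_def
proof (intro CollectI conjI allI impI ballI)
  fix j assume j: "j \<notin> {1..Suc n}"
  then have "j \<noteq> Suc n" "j \<notin> {1..n}" by auto
  then show "(g(Suc n := v)) j = 0" using RG_out[OF g] by simp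
next
  fix j assume j: "j \<in> {1..Suc n}"
  show "(g(Suc n := v)) j = 0 \<or> ((g(Suc n := v)) j \<le> j \<and> (g(Suc n := v)) ((g(Suc n := v)) j) = (g(Suc n := v)) j)"
  proof (cases "j = Suc n")
    case True
    have "v = Suc n \<or> v = 0 \<or> v \<in> Mg n g" using v by (simp add: Vs_def)
    then show ?thesis
    proof (elim disjE)
      assume "v \<in> Mg n g"
      then have "v \<le> n" "g v = v" by (auto simp: Mg_def)
      then show ?thesis using True by simp
    qed (use True in simp_all)
  next
    case False
    then have jn: "j \<in> {1..n}" using j by auto
    show ?thesis
    proof (cases "g j = 0")
      case True then show ?thesis using False by simp
    next
      case nz: False
      have "g j \<in> Mg n g" "g j \<le> j" using RG_in[OF g jn nz] by auto
      then have "g j \<le> n" "g (g j) = g j" by (auto simp: Mg_def)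
      then show ?thesis using False \<open>g j \<le> j\<close> by simp
    qed
  qed
qed

lemma restr_RG:
  assumes h: "h \<in> RG (Suc n)"
  shows "h(Suc n := 0) \<in> RG n" "h (Suc n) \<in> Vs n (h(Suc n := 0))"
proof -
  have hout: "h j = 0" if "j \<notin> {1..Suc n}" for j using RG_out[OF h that] .
  have hin: "h j = 0 \<or> (h j \<le> j \<and> h (h j) = h j)" if "j \<in> {1..Suc n}" for j
    using h that unfolding RG_def by blast
  show R: "h(Suc n := 0) \<in> RG n"
    unfolding RG_def
  proof (intro CollectI conjI allI impI ballI)
    fix j assume "j \<notin> {1..n}"
    then show "(h(Suc n := 0)) j = 0" using hout[of j] by (cases "j = Suc n") auto
  next
    fix j assume j: "j \<in> {1..n}"
    then have j': "j \<in> {1..Suc n}" "j \<noteq> Suc n" by auto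
    show "(h(Suc n := 0)) j = 0 \<or> ((h(Suc n := 0)) j \<le> j \<and> (h(Suc n := 0)) ((h(Suc n := 0)) j) = (h(Suc n := 0)) j)"
    proof (cases "h j = 0")
      case False
      then have "h j \<le> j" "h (h j) = h j" using hin[OF j'(1)] by auto
      moreover have "h j \<noteq> Suc n" using calculation(1) j by auto
      ultimately show ?thesis using j'(2) by simp
    qed (use j'(2) in simp)
  qed
  show "h (Suc n) \<in> Vs n (h(Suc n := 0))"
  proof (cases "h (Suc n) = 0 \<or> h (Suc n) = Suc n")
    case True then show ?thesis by (auto simp: Vs_def)
  next
    case False
    then have a: "h (Suc n) \<le> Suc n" "h (h (Suc n)) = h (Suc n)" using hin[of "Suc n"] by auto
    then have "h (Suc n) \<in> {1..n}" using False by auto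
    moreover have "(h(Suc n := 0)) (h (Suc n)) = h (Suc n)" using a False by simp
    ultimately show ?thesis by (simp add: Vs_def Mg_def)
  qed
qed

lemma RG_Suc_bij: "bij_betw (\<lambda>(g, v). g(Suc n := v)) (Sigma (RG n) (Vs n)) (RG (Suc n))"
proof (rule bij_betw_byWitness[where f'="\<lambda>h. (h(Suc n := 0), h (Suc n))"])
  show "\<forall>a\<in>Sigma (RG n) (Vs n). (\<lambda>h. (h(Suc n := 0), h (Suc n))) ((\<lambda>(g, v). g(Suc n := v)) a) = a"
  proof
    fix a assume "a \<in> Sigma (RG n) (Vs n)"
    then obtain g v where a: "a = (g, v)" "g \<in> RG n" by blast
    have "g (Suc n) = 0" using RG_out[OF a(2)] by simp
    then have "g(Suc n := 0) = g" by (simp add: fun_upd_idem)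
    then show "(\<lambda>h. (h(Suc n := 0), h (Suc n))) ((\<lambda>(g, v). g(Suc n := v)) a) = a" using a by simp
  qed
  show "\<forall>a'\<in>RG (Suc n). (\<lambda>(g, v). g(Suc n := v)) ((\<lambda>h. (h(Suc n := 0), h (Suc n))) a') = a'"
    by simp
  show "(\<lambda>(g, v). g(Suc n := v)) ` Sigma (RG n) (Vs n) \<subseteq> RG (Suc n)"
    using ext_RG by auto
  show "(\<lambda>h. (h(Suc n := 0), h (Suc n))) ` RG (Suc n) \<subseteq> Sigma (RG n) (Vs n)"
    using restr_RG by auto
qed

lemma finite_Mg: "finite (Mg n g)"
  by (rule finite_subset[OF Mg_sub]) simp

lemma finite_Vs: "finite (Vs n g)"
  by (simp add: Vs_def finite_Mg)

lemma finite_RG: "finite (RG n)"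
proof (induction n)
  case 0 then show ?case by (simp add: RG_0)
next
  case (Suc n)
  have "finite (Sigma (RG n) (Vs n))" using Suc finite_Vs by blast
  then show ?case using bij_betw_finite[OF RG_Suc_bij] by simp
qed

lemma Mg_ext:
  assumes g: "g \<in> RG n" and v: "v \<in> Vs n g"
  shows "card (Mg (Suc n) (g(Suc n := v))) = card (Mg n g) + (if v = Suc n then 1 else 0)"
proof -
  have g0: "g (Suc n) = 0" using RG_out[OF g] by simp
  have "Mg (Suc n) (g(Suc n := v)) = Mg n g \<union> (if v = Suc n then {Suc n} else {})"
    using g0 by (auto simp: Mg_def)
  moreover have "Suc n \<notin> Mg n g" by (auto simp: Mg_def)
  ultimately show ?thesis using finite_Mg[of n g] by auto
qed

definition cnt :: "nat \<Rightarrow> nat \<Rightarrow> nat" where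
  "cnt n k = card {g\<in>RG n. card (Mg n g) = k}"

lemma cnt_sum: "int (cnt n k) = (\<Sum>g\<in>RG n. if card (Mg n g) = k then 1 else 0)"
  unfolding cnt_def by (simp add: sum.inter_filter[OF finite_RG, symmetric])

lemma cnt_Stirling: "cnt n k = Stirling (Suc n) (Suc k)"
proof (induction n arbitrary: k)
  case 0
  have "cnt 0 k = (if k = 0 then 1 else 0)"
    by (auto simp: cnt_def RG_0 Mg_def)
  then show ?case by (cases k) auto
next
  case (Suc n)
  let ?E = "\<lambda>(g, v). g(Suc n := v)"
  have bij: "bij_betw ?E (Sigma (RG n) (Vs n)) (RG (Suc n))" by (rule RG_Suc_bij)
  have fS: "finite (Sigma (RG n) (Vs n))" using finite_RG finite_Vs by blast
  have "int (cnt (Suc n) k) = (\<Sum>h\<in>RG (Suc n). if card (Mg (Suc n) h) = k then 1 else 0)"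
    by (rule cnt_sum)
  also have "\<dots> = (\<Sum>p\<in>Sigma (RG n) (Vs n). if card (Mg (Suc n) (?E p)) = k then 1 else 0)"
    using sum.reindex_bij_betw[OF bij, of "\<lambda>h. if card (Mg (Suc n) h) = k then 1 else (0::int)"] by simp
  also have "\<dots> = (\<Sum>g\<in>RG n. \<Sum>v\<in>Vs n g. if card (Mg (Suc n) (g(Suc n := v))) = k then 1 else 0)"
    by (subst sum.Sigma[OF finite_RG]) (auto simp: finite_Vs split_def)
  also have "\<dots> = (\<Sum>g\<in>RG n. (if card (Mg n g) + 1 = k then 1 else 0) +
      int (card (Mg n g) + 1) * (if card (Mg n g) = k then 1 else 0))"
  proof (rule sum.cong[OF refl])
    fix g assume g: "g \<in> RG n"
    let ?c = "card (Mg n g)"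
    have "(\<Sum>v\<in>Vs n g. if card (Mg (Suc n) (g(Suc n := v))) = k then 1 else (0::int)) =
        (\<Sum>v\<in>Vs n g. if ?c + (if v = Suc n then 1 else 0) = k then 1 else 0)"
      by (rule sum.cong[OF refl]) (simp add: Mg_ext[OF g])
    also have "\<dots> = (if ?c + 1 = k then 1 else 0) + (\<Sum>v\<in>insert 0 (Mg n g). if ?c = k then 1 else 0)"
    proof -
      have "Suc n \<notin> insert 0 (Mg n g)" by (auto simp: Mg_def)
      moreover have "(\<Sum>v\<in>insert 0 (Mg n g). if ?c + (if v = Suc n then 1 else 0) = k then 1 else (0::int)) =
          (\<Sum>v\<in>insert 0 (Mg n g). if ?c = k then 1 else 0)"
        by (rule sum.cong[OF refl]) (auto simp: Mg_def)
      ultimately show ?thesis unfolding Vs_def using finite_Mg by (simp add: sum.insert)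
    qed
    also have "(\<Sum>v\<in>insert 0 (Mg n g). if ?c = k then 1 else (0::int)) = int (?c + 1) * (if ?c = k then 1 else 0)"
    proof -
      have "0 \<notin> Mg n g" by (auto simp: Mg_def)
      then have "card (insert 0 (Mg n g)) = ?c + 1" using finite_Mg by simp
      then show ?thesis by simp
    qed
    finally show "(\<Sum>v\<in>Vs n g. if card (Mg (Suc n) (g(Suc n := v))) = k then 1 else 0) =
      (if ?c + 1 = k then 1 else 0) + int (?c + 1) * (if ?c = k then 1 else 0)" .
  qed
  also have "\<dots> = (\<Sum>g\<in>RG n. if card (Mg n g) + 1 = k then 1 else 0) +
      int (k + 1) * (\<Sum>g\<in>RG n. if card (Mg n g) = k then 1 else 0)"
  proof -
    have "(\<Sum>g\<in>RG n. int (card (Mg n g) + 1) * (if card (Mg n g) = k then 1 else 0)) =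
        (\<Sum>g\<in>RG n. int (k + 1) * (if card (Mg n g) = k then 1 else 0))"
      by (rule sum.cong) auto
    then show ?thesis by (simp add: sum.distrib sum_distrib_left)
  qed
  finally have eq: "int (cnt (Suc n) k) = (\<Sum>g\<in>RG n. if card (Mg n g) + 1 = k then 1 else 0) + int (k + 1) * int (cnt n k)"
    using cnt_sum[of n k] by simp
  show ?case
  proof (cases k)
    case 0
    have "(\<Sum>g\<in>RG n. if card (Mg n g) + 1 = k then 1 else (0::int)) = 0" using 0 by simp
    then have "int (cnt (Suc n) k) = int (cnt n k)" using eq 0 by simp
    then show ?thesis using Suc.IH[of 0] 0 by simp
  next
    case (Suc k')
    have "(\<Sum>g\<in>RG n. if card (Mg n g) + 1 = k then 1 else (0::int)) = int (cnt n k')"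
      unfolding cnt_sum using Suc by simp
    then have "int (cnt (Suc n) k) = int (cnt n k') + int (k + 1) * int (cnt n k)" using eq by simp
    then have "cnt (Suc n) k = cnt n k' + (k + 1) * cnt n k" by (simp only: of_nat_add[symmetric] of_nat_mult[symmetric] of_nat_eq_iff)
    then show ?thesis using Suc.IH[of k'] Suc.IH[of k] Suc by simp
  qed
qed

lemma sum_RG:
  fixes f :: "nat \<Rightarrow> int"
  shows "(\<Sum>g\<in>RG n. f (card (Mg n g))) = (\<Sum>k\<le>n. int (Stirling (Suc n) (Suc k)) * f k)"
proof -
  have sub: "(\<lambda>g. card (Mg n g)) ` RG n \<subseteq> {..n}"
    using card_mono[OF _ Mg_sub, of n] by auto
  have "(\<Sum>g\<in>RG n. f (card (Mg n g))) = (\<Sum>k\<le>n. \<Sum>g\<in>{g\<in>RG n. card (Mg n g) = k}. f (card (Mg n g)))"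
    by (rule sum.group[OF finite_RG _ sub, symmetric]) simp
  also have "\<dots> = (\<Sum>k\<le>n. int (cnt n k) * f k)"
  proof (rule sum.cong[OF refl])
    fix k
    have "(\<Sum>g\<in>{g\<in>RG n. card (Mg n g) = k}. f (card (Mg n g))) = (\<Sum>g\<in>{g\<in>RG n. card (Mg n g) = k}. f k)"
      by (rule sum.cong) auto
    then show "(\<Sum>g\<in>{g\<in>RG n. card (Mg n g) = k}. f (card (Mg n g))) = int (cnt n k) * f k"
      by (simp add: cnt_def)
  qed
  finally show ?thesis by (simp add: cnt_Stirling)
qed


declare fscale_apply[simp del]

definition ZZ :: "nat set \<Rightarrow> (nat \<Rightarrow> real) set" where
  "ZZ T = {x. \<forall>j\<in>T. x j = 0}"

lemma ZZ_sub: "FV.subspace (ZZ T)"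
  unfolding FV.subspace_def ZZ_def by (auto simp: zero_fun_def plus_fun_def fscale_def)

lemma ZZ_insert: "ZZ (insert t T) = ZZ T \<inter> {x. x t = 0}"
  by (auto simp: ZZ_def)

lemma dim_VM_le:
  assumes "finite M"
  shows "FV.dim (VM M G) \<le> card M"
proof -
  have "VM M G \<subseteq> FV.span (ev ` M)"
  proof
    fix x assume x: "x \<in> VM M G"
    have "x = (\<Sum>j\<in>M. fscale (x j) (ev j))"
    proof
      fix i
      have "(\<Sum>j\<in>M. fscale (x j) (ev j)) i = (\<Sum>j\<in>M. if j = i then x j else 0)"
        unfolding sum_fun_apply fscale_apply by (rule sum.cong) (auto simp: ev_def)
      also have "\<dots> = x i" using x assms by (auto simp: VM_def)
      finally show "x i = (\<Sum>j\<in>M. fscale (x j) (ev j)) i" by simp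
    qed
    also have "\<dots> \<in> FV.span (ev ` M)"
      by (intro FV.span_sum FV.span_scale FV.span_base) auto
    finally show "x \<in> FV.span (ev ` M)" .
  qed
  then have "FV.dim (VM M G) \<le> card (ev ` M)" using FV.dim_le_card assms by blast
  also have "\<dots> \<le> card M" using assms by (rule card_image_le)
  finally show ?thesis .
qed

context
  fixes n g G
  assumes g: "g \<in> RG n" and G: "G \<in> SS n g"
begin

lemma finF: "finite (pb n g ` G)"
  using F_Fam[OF g G] finite_subset[of _ "Fam n"] by auto

lemma ambV: "amb n (Vn n (pb n g ` G))"
  by (rule amb_Vn[OF finF])

lemma witness:
  assumes t: "t \<in> {1..n} - Mg n g" and T: "T \<subseteq> {1..n} - Mg n g" "t \<notin> T"
  shows "\<exists>w. w \<in> Vn n (pb n g ` G) \<inter> ZZ T \<and> w t \<noteq> 0"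
proof -
  define w where "w = ev t - (if g t = 0 then 0 else ev (g t))"
  have tn: "t \<in> {1..n}" using t by blast
  have gtM: "g t \<noteq> 0 \<Longrightarrow> g t \<in> Mg n g" using RG_in[OF g tn] by blast
  have gtt: "g t \<noteq> t" using t by (auto simp: Mg_def)
  have gtn: "g t \<noteq> 0 \<Longrightarrow> g t \<in> {1..n}" using gtM Mg_sub[of n g] by blast
  have wR: "w \<in> Rn n"
    using tn gtn by (auto simp: w_def Rn_def ev_def)
  have wH: "w \<in> hyp n I" if I: "I \<in> pb n g ` G" for I
  proof -
    obtain S where S: "S \<in> G" "I = pb n g S" using I by blast
    have SM: "S \<subseteq> Mg n g" using GsubM[OF g G S(1)] by blast
    have fI: "finite I" using S(2) by (simp add: pb_def)
    have e1: "t \<in> I \<longleftrightarrow> g t \<in> S" using S(2) tn by (simp add: pb_def)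
    have "(\<Sum>j\<in>I. w j) = (\<Sum>j\<in>I. ev t j) - (if g t = 0 then 0 else (\<Sum>j\<in>I. ev (g t) j))"
      by (simp add: w_def sum_subtractf)
    also have "\<dots> = 0"
    proof (cases "g t = 0")
      case True
      have "0 \<notin> S" using SM Mg_sub by force
      then have "t \<notin> I" using e1 True by simp
      then show ?thesis using True fI by (simp add: sum_ev)
    next
      case False
      have gM: "g t \<in> Mg n g" using gtM[OF False] .
      then have "g t \<in> {1..n}" "g (g t) = g t" by (auto simp: Mg_def)
      then have "g t \<in> I \<longleftrightarrow> g t \<in> S" using S(2) by (simp add: pb_def)
      then show ?thesis using e1 False fI by (simp add: sum_ev)
    qed
    finally show ?thesis using wR by (simp add: hyp_def)
  qed
  have wZ: "w \<in> ZZ T"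
  proof -
    have "w j = 0" if j: "j \<in> T" for j
    proof -
      have "j \<noteq> t" using j T(2) by blast
      moreover have "g t \<noteq> 0 \<Longrightarrow> j \<noteq> g t" using j T(1) gtM by blast
      ultimately show ?thesis by (auto simp: w_def ev_def)
    qed
    then show ?thesis by (simp add: ZZ_def)
  qed
  have "w t = 1" using gtt by (simp add: w_def ev_def)
  then show ?thesis using wR wH wZ by (intro exI[of _ w]) (auto simp: Vn_mem)
qed

lemma cut_T:
  assumes "T \<subseteq> {1..n} - Mg n g"
  shows "FV.dim (Vn n (pb n g ` G)) = FV.dim (Vn n (pb n g ` G) \<inter> ZZ T) + card T"
proof -
  have "finite T" using assms finite_subset by blast
  then show ?thesis using assms
  proof (induction T rule: finite_induct)
    case empty then show ?case by (simp add: ZZ_def)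
  next
    case (insert t T)
    let ?V = "Vn n (pb n g ` G)"
    let ?U = "?V \<inter> ZZ T"
    have sU: "FV.subspace ?U" using ambV ZZ_sub by (simp add: amb_def FV.subspace_inter)
    have rU: "?U \<subseteq> Rn n" using ambV by (auto simp: amb_def)
    have cf: "?U \<subseteq> {x. x t = 0} \<or> FV.dim (?U \<inter> {x. x t = 0}) + 1 = FV.dim ?U"
      by (rule cut_functional(2)[of "\<lambda>x. x t", OF _ _ sU rU]) (simp_all add: fscale_apply)
    obtain w where w: "w \<in> ?U" "w t \<noteq> 0" using witness[of t T] insert by auto
    have "FV.dim (?U \<inter> {x. x t = 0}) + 1 = FV.dim ?U" using cf w by blast
    moreover have "?V \<inter> ZZ (insert t T) = ?U \<inter> {x. x t = 0}" by (auto simp: ZZ_insert)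
    ultimately show ?case using insert by simp
  qed
qed

lemma VZ: "Vn n (pb n g ` G) \<inter> ZZ ({1..n} - Mg n g) = VM (Mg n g) G"
proof -
  have key: "(\<Sum>j\<in>pb n g S. x j) = (\<Sum>j\<in>S. x j)"
    if S: "S \<in> G" and x: "\<forall>j. j \<notin> Mg n g \<longrightarrow> x j = 0" for S and x :: "nat \<Rightarrow> real"
  proof -
    have fin: "finite (pb n g S)" by (simp add: pb_def)
    have SM: "S \<subseteq> Mg n g" using GsubM[OF g G S] by blast
    have "(\<Sum>j\<in>pb n g S. x j) = (\<Sum>j\<in>pb n g S \<inter> Mg n g. x j)"
      using fin x by (intro sum.mono_neutral_right) auto
    also have "pb n g S \<inter> Mg n g = S" by (rule pb_M[OF SM])
    finally show ?thesis .
  qed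
  show ?thesis
  proof
    show "Vn n (pb n g ` G) \<inter> ZZ ({1..n} - Mg n g) \<subseteq> VM (Mg n g) G"
    proof
      fix x assume x: "x \<in> Vn n (pb n g ` G) \<inter> ZZ ({1..n} - Mg n g)"
      have sup: "\<forall>j. j \<notin> Mg n g \<longrightarrow> x j = 0"
      proof (intro allI impI)
        fix j assume j: "j \<notin> Mg n g"
        show "x j = 0"
        proof (cases "j \<in> {1..n}")
          case True then show ?thesis using x j by (auto simp: ZZ_def)
        next
          case False then show ?thesis using x by (auto simp: Vn_def Rn_def)
        qed
      qed
      have "(\<Sum>j\<in>S. x j) = 0" if S: "S \<in> G" for S
      proof -
        have "x \<in> hyp n (pb n g S)" using x S by (auto simp: Vn_def)
        then have "(\<Sum>j\<in>pb n g S. x j) = 0" by (simp add: hyp_def)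
        then show ?thesis using key[OF S sup] by simp
      qed
      then show "x \<in> VM (Mg n g) G" using sup by (simp add: VM_def)
    qed
    show "VM (Mg n g) G \<subseteq> Vn n (pb n g ` G) \<inter> ZZ ({1..n} - Mg n g)"
    proof
      fix x assume x: "x \<in> VM (Mg n g) G"
      have sup: "\<forall>j. j \<notin> Mg n g \<longrightarrow> x j = 0" using x by (simp add: VM_def)
      have "x j = 0" if "j \<notin> {1..n}" for j using sup Mg_sub[of n g] that by blast
      then have R: "x \<in> Rn n" by (simp add: Rn_def)
      have H: "x \<in> hyp n I" if I: "I \<in> pb n g ` G" for I
      proof -
        obtain S where S: "S \<in> G" "I = pb n g S" using I by blast
        have "(\<Sum>j\<in>S. x j) = 0" using x S(1) by (simp add: VM_def)
        then show ?thesis using key[OF S(1) sup] R S(2) by (simp add: hyp_def)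
      qed
      have "x \<in> ZZ ({1..n} - Mg n g)" using sup by (simp add: ZZ_def)
      then show "x \<in> Vn n (pb n g ` G) \<inter> ZZ ({1..n} - Mg n g)" using R H by (simp add: Vn_mem)
    qed
  qed
qed

lemma dimV: "FV.dim (Vn n (pb n g ` G)) = FV.dim (VM (Mg n g) G) + (n - card (Mg n g))"
proof -
  have "card ({1..n} - Mg n g) = n - card (Mg n g)"
    using Mg_sub finite_Mg by (simp add: card_Diff_subset)
  then show ?thesis using cut_T[of "{1..n} - Mg n g"] VZ by simp
qed

lemma w_pb:
  assumes i: "i \<le> n"
  shows "w n (n - i) (pb n g ` G) = (if FV.dim (VM (Mg n g) G) + i = card (Mg n g) then (-1) ^ card G else 0)"
proof -
  have d: "FV.dim (VM (Mg n g) G) \<le> card (Mg n g)" by (rule dim_VM_le[OF finite_Mg])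
  have m: "card (Mg n g) \<le> n" using card_mono[OF _ Mg_sub, of n g] by simp
  have "(FV.dim (Vn n (pb n g ` G)) = n - i) = (FV.dim (VM (Mg n g) G) + i = card (Mg n g))"
    unfolding dimV using d m i by linarith
  then show ?thesis by (simp add: w_def card_F[OF g G])
qed

end

lemma decomp:
  assumes i: "i \<le> n"
  shows "coeff (char_poly n (resonance n)) (n - i) = (\<Sum>k\<le>n. int (Stirling (Suc n) (Suc k)) * D i (Suc k))"
proof -
  have fS: "\<forall>g\<in>RG n. finite (SS n g)"
  proof
    fix g show "finite (SS n g)"
      by (rule finite_subset[of _ "Pow (FamM (Mg n g))"]) (auto simp: SS_def FamM_def finite_Mg)
  qed
  have "coeff (char_poly n (resonance n)) (n - i) = (\<Sum>F\<in>Pow (Fam n). w n (n - i) F)"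
    by (rule coeff_char)
  also have "\<dots> = (\<Sum>p\<in>Sigma (RG n) (SS n). w n (n - i) ((\<lambda>(g, G). pb n g ` G) p))"
    using sum.reindex_bij_betw[OF bij_decomp, of "w n (n - i)"] by simp
  also have "\<dots> = (\<Sum>g\<in>RG n. \<Sum>G\<in>SS n g. w n (n - i) (pb n g ` G))"
    by (subst sum.Sigma[OF finite_RG fS]) (simp add: split_def)
  also have "\<dots> = (\<Sum>g\<in>RG n. D i (Suc (card (Mg n g))))"
  proof (rule sum.cong[OF refl])
    fix g assume g: "g \<in> RG n"
    have "(\<Sum>G\<in>SS n g. w n (n - i) (pb n g ` G)) =
        (\<Sum>G\<in>SS n g. if FV.dim (VM (Mg n g) G) + i = card (Mg n g) then (-1) ^ card G else 0)"
      by (rule sum.cong[OF refl]) (rule w_pb[OF g _ i])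
    also have "\<dots> = DM i (Mg n g)"
    proof -
      have fP: "finite (Pow (FamM (Mg n g)))" by (auto simp: FamM_def finite_Mg)
      have "(\<Sum>G\<in>SS n g. if FV.dim (VM (Mg n g) G) + i = card (Mg n g) then (-1) ^ card G else (0::int)) =
          (\<Sum>G\<in>Pow (FamM (Mg n g)). if sepM (Mg n g) G then (if FV.dim (VM (Mg n g) G) + i = card (Mg n g) then (-1) ^ card G else 0) else 0)"
        unfolding SS_def by (rule sum.inter_filter[OF fP])
      also have "\<dots> = DM i (Mg n g)" unfolding DM_def by (rule sum.cong[OF refl]) simp
      finally show ?thesis .
    qed
    also have "\<dots> = D i (Suc (card (Mg n g)))" by (rule DM_D[OF Mg_sub])
    finally show "(\<Sum>G\<in>SS n g. w n (n - i) (pb n g ` G)) = D i (Suc (card (Mg n g)))" .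
  qed
  also have "\<dots> = (\<Sum>k\<le>n. int (Stirling (Suc n) (Suc k)) * D i (Suc k))"
    by (rule sum_RG)
  finally show ?thesis .
qed


definition cc :: "nat \<Rightarrow> nat \<Rightarrow> nat" where
  "cc i k = nat ((-1) ^ i * D i k)"

lemma cc_int: "int (cc i (Suc m)) = (-1) ^ i * D i (Suc m)"
  using D_sign[of i m] by (simp add: cc_def)

lemma cc_zero_small: "1 \<le> k \<Longrightarrow> k \<le> i \<Longrightarrow> cc i k = 0"
proof -
  assume "1 \<le> k" "k \<le> i"
  then obtain m where m: "k = Suc m" "m < i" by (cases k) auto
  then show "cc i k = 0" using D_zero_small[of m i] by (simp add: cc_def)
qed

lemma cc_zero_large: "2 ^ i < k \<Longrightarrow> cc i k = 0"
proof -
  assume a: "2 ^ i < k"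
  then obtain m where m: "k = Suc m" by (cases k) auto
  have p: "(0::nat) < 2 ^ i" by simp
  then have "2 ^ i - 1 < m" using a m by linarith
  then have "SG i m = {}" by (rule SG_empty)
  then have "(-1) ^ i * D i (Suc m) \<le> 0" using D_bound[of i m] by simp
  then show "cc i k = 0" using m by (simp add: cc_def)
qed

lemma betti_formula:
  assumes n: "1 \<le> n"
  shows "betti n (resonance n) i = (\<Sum>k = i + 1..2 ^ i. cc i k * Stirling (n + 1) k)"
proof (cases "i \<le> n")
  case False
  have "(\<Sum>k = i + 1..2 ^ i. cc i k * Stirling (n + 1) k) = 0"
    by (rule sum.neutral) (use False in auto)
  then show ?thesis using False by (simp add: betti_def)
next
  case True
  define h where "h k = cc i k * Stirling (n + 1) k" for k
  have co: "coeff (char_poly n (resonance n)) (n - i) = (\<Sum>k\<le>n. int (Stirling (Suc n) (Suc k)) * D i (Suc k))"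
    by (rule decomp[OF True])
  have "(-1) ^ i * coeff (char_poly n (resonance n)) (n - i) = (\<Sum>k\<le>n. int (Stirling (Suc n) (Suc k)) * ((-1) ^ i * D i (Suc k)))"
    unfolding co by (simp add: sum_distrib_left algebra_simps)
  also have "\<dots> = (\<Sum>k\<le>n. int (h (Suc k)))"
    by (rule sum.cong[OF refl]) (simp add: h_def cc_int)
  also have "\<dots> = int (\<Sum>k\<le>n. h (Suc k))" by simp
  finally have e: "(-1) ^ i * coeff (char_poly n (resonance n)) (n - i) = int (\<Sum>k\<le>n. h (Suc k))" .
  have abs: "\<bar>coeff (char_poly n (resonance n)) (n - i)\<bar> = int (\<Sum>k\<le>n. h (Suc k))"
  proof -
    have "\<bar>(-1::int) ^ i\<bar> = 1" by simp
    then have "\<bar>coeff (char_poly n (resonance n)) (n - i)\<bar> = \<bar>(-1) ^ i * coeff (char_poly n (resonance n)) (n - i)\<bar>"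
      by (simp add: abs_mult)
    moreover have "0 \<le> (\<Sum>k\<le>n. int (h (Suc k)))" by (rule sum_nonneg) simp
    ultimately show ?thesis using e by simp
  qed
  have s1: "(\<Sum>k\<le>n. h (Suc k)) = (\<Sum>k\<in>{1..n+1}. h k)"
  proof -
    have "(\<Sum>k\<le>n. h (Suc k)) = (\<Sum>k<Suc n. h (Suc k))" by (simp add: lessThan_Suc_atMost)
    also have "\<dots> = (\<Sum>k\<in>{Suc 0..Suc n}. h k)" by (rule sum.atLeast1_atMost_eq[symmetric])
    finally show ?thesis by simp
  qed
  have s2: "(\<Sum>k\<in>{1..n+1}. h k) = (\<Sum>k = i + 1..2 ^ i. h k)"
  proof -
    have "(\<Sum>k\<in>{1..n+1}. h k) = (\<Sum>k\<in>{1..n+1} \<union> {i+1..2^i}. h k)"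
    proof (rule sum.mono_neutral_left)
      show "\<forall>k\<in>{1..n+1} \<union> {i+1..2^i} - {1..n+1}. h k = 0"
        by (auto simp: h_def)
    qed auto
    also have "\<dots> = (\<Sum>k = i + 1..2 ^ i. h k)"
    proof (rule sum.mono_neutral_right)
      show "\<forall>k\<in>{1..n+1} \<union> {i+1..2^i} - {i+1..2^i}. h k = 0"
      proof
        fix k assume k: "k \<in> {1..n+1} \<union> {i+1..2^i} - {i+1..2^i}"
        then have "1 \<le> k" "k \<le> i \<or> 2 ^ i < k" by auto
        then show "h k = 0" using cc_zero_small cc_zero_large by (auto simp: h_def)
      qed
    qed auto
    finally show ?thesis .
  qed
  have "betti n (resonance n) i = nat \<bar>coeff (char_poly n (resonance n)) (n - i)\<bar>"
    using True by (simp add: betti_def)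
  also have "\<dots> = (\<Sum>k\<le>n. h (Suc k))" unfolding abs of_nat_sum[symmetric] nat_int ..
  finally show ?thesis using s1 s2 by (simp add: h_def)
qed

theorem theorem1p2:
  shows "\<exists>c :: nat \<Rightarrow> nat \<Rightarrow> nat.
    (\<forall>i k. i + 1 \<le> k \<and> k \<le> 2 ^ i \<longrightarrow> 0 < c i k) \<and>
    (\<forall>i n. 1 \<le> n \<longrightarrow>
       betti n (resonance n) i = (\<Sum>k = i + 1..2 ^ i. c i k * Stirling (n + 1) k)) \<and>
    (\<forall>i k. i + 1 \<le> k \<and> k \<le> 2 ^ i \<longrightarrow>
       real (c i k) \<le> real ((2 ^ i - 1) choose (k - 1)) * fact (k - 1) / fact i)"
proof (intro exI[of _ cc] conjI allI impI)
  fix i k assume a: "i + 1 \<le> k \<and> k \<le> 2 ^ i"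
  show "0 < cc i k" using D_pos[of i k] a by (simp add: cc_def)
next
  fix i n :: nat assume "1 \<le> n"
  then show "betti n (resonance n) i = (\<Sum>k = i + 1..2 ^ i. cc i k * Stirling (n + 1) k)"
    by (rule betti_formula)
next
  fix i k assume a: "i + 1 \<le> k \<and> k \<le> 2 ^ i"
  then obtain m where m: "k = Suc m" by (cases k) auto
  have p: "(0::nat) < 2 ^ i" by simp
  have mb: "m \<le> 2 ^ i - 1" using a m p by linarith
  have "int (cc i k) \<le> int (card (SG i m))" using D_bound[of i m] cc_int[of i m] m by simp
  then have "cc i k \<le> card (SG i m)" by simp
  then have "real (cc i k) \<le> real (card (SG i m))" by simp
  also have "\<dots> \<le> real ((2 ^ i - 1) choose m) * fact m / fact i" by (rule SG_bound[OF mb])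
  finally show "real (cc i k) \<le> real ((2 ^ i - 1) choose (k - 1)) * fact (k - 1) / fact i"
    using m by simp
qed


end
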